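(* Let $n,m\ge1$ be fixed and let $\alpha>0$, $\beta\ge0$ be fixed constants. There exists a constant $c$, independent of $N$, with the following property. Let $N\ge1$ and let $\mathbf A_i,\mathbf Q_i\in\mathbb R^{n\times n}$, $\mathbf B_i,\mathbf S_i\in\mathbb R^{n\times m}$, $\mathbf R_i\in\mathbb R^{m\times m}$ ($1\le i\le N$), $\mathbf T\in\mathbb R^{n\times n}$, with $\mathbf Q_i,\mathbf R_i,\mathbf T$ symmetric, satisfy: the smallest eigenvalues of $\mathbf T$ and of each $\begin{pmatrix}\mathbf Q_i&\mathbf S_i\\ \mathbf S_i^{\mathsf T}&\mathbf R_i\end{pmatrix}$ exceed $\alpha$; $\|\mathbf A_i\|_\infty\le1/4$ and $\|\mathbf A_i^{\mathsf T}\|_\infty\le1/4$; all these matrices have norm at most $\beta$. Suppose (P1) $\mathbf D_{1:N}$ is invertible with $\|\mathbf D_{1:N}^{-1}\|_\infty\le2$, and (P2) every row of $[\mathbf W^{1/2}\mathbf D_{1:N}]^{-1}$ has Euclidean norm at most $\sqrt2$. Then for every $\mathbf y$, the solution $(\mathbf X,\mathbf U,\boldsymbol\Lambda)$ of $\nabla\mathcal T^*[\mathbf X,\mathbf U,\boldsymbol\Lambda]=\mathbf y$ satisfies $$\|\mathbf X\|_\infty+\|\mathbf U\|_\infty+\|\boldsymbol\Lambda\|_\infty\le c\|\mathbf y\|_\infty.$$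
   Context: $-1<\tau_1<\dots<\tau_N<1$ are the $N$ Gauss abscissas (roots of the degree-$N$ Legendre polynomial), $\omega_1,\dots,\omega_N>0$ the Gauss weights, $\tau_0=-1$, $\mathbf W=\mathrm{diag}(\omega_1,\dots,\omega_N)$. $D_{ij}=\dot L_j(\tau_i)$ ($1\le i\le N$, $0\le j\le N$) with $L_j(\tau)=\prod_{k=0,k\ne j}^N\frac{\tau-\tau_k}{\tau_j-\tau_k}$, $\mathbf D_{1:N}=(D_{ij})_{1\le i,j\le N}$; $D^\dagger_{ij}=-(\omega_j/\omega_i)D_{ji}$ for $1\le i,j\le N$ and $D^\dagger_{i,N+1}=-\sum_{j=1}^ND^\dagger_{ij}$. Matrix $\|\cdot\|_\infty$ is the largest absolute row sum. The linear map $\nabla\mathcal T^*$ sends $(\mathbf X_1,\dots,\mathbf X_{N+1},\mathbf U_1,\dots,\mathbf U_N,\boldsymbol\Lambda_1,\dots,\boldsymbol\Lambda_{N+1})$ (blocks in $\mathbb R^n,\mathbb R^m,\mathbb R^n$) to $\mathbf y=(\mathbf y_1,\dots,\mathbf y_5)$ with $\mathbf y_{1i}=\sum_{j=1}^ND_{ij}\mathbf X_j-\mathbf A_i\mathbf X_i-\mathbf B_i\mathbf U_i$; $\mathbf y_2=\mathbf X_{N+1}-\sum_{j=1}^N\omega_j(\mathbf A_j\mathbf X_j+\mathbf B_j\mathbf U_j)$; $\mathbf y_{3i}=\sum_{j=1}^{N+1}D^\dagger_{ij}\boldsymbol\Lambda_j+\mathbf A_i^{\mathsf T}\boldsymbol\Lambda_i+\mathbf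 Q_i\mathbf X_i+\mathbf S_i\mathbf U_i$; $\mathbf y_4=\boldsymbol\Lambda_{N+1}-\mathbf T\mathbf X_{N+1}$; $\mathbf y_{5i}=\mathbf S_i^{\mathsf T}\mathbf X_i+\mathbf R_i\mathbf U_i+\mathbf B_i^{\mathsf T}\boldsymbol\Lambda_i$ ($1\le i\le N$). For block vectors, $\|\cdot\|_\infty$ is the maximum Euclidean norm of the blocks. (In the paper the matrices are the derivatives of the dynamics, Hamiltonian and terminal cost along the optimal solution at the Gauss points, and the conditions above are assumptions (A2),(A3),(P1),(P2).) *)

theory Defs
  imports "HOL-Analysis.Analysis"
begin

text \<open>Legendre polynomials via the three-term recurrence
  (n+1) P_(n+1) = (2n+1) x P_n - n P_(n-1).\<close>
fun legendre :: "nat \<Rightarrow> real \<Rightarrow> real" where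
  "legendre 0 x = 1"
| "legendre (Suc 0) x = x"
| "legendre (Suc (Suc k)) x =
     ((2 * real k + 3) * x * legendre (Suc k) x - (real k + 1) * legendre k x) / (real k + 2)"

definition gauss_nodes :: "nat \<Rightarrow> (nat \<Rightarrow> real) \<Rightarrow> bool" where
  "gauss_nodes N tau \<longleftrightarrow>
     tau 0 = -1 \<and> -1 < tau 1 \<and> tau N < 1 \<and>
     (\<forall>i\<in>{1..<N}. tau i < tau (Suc i)) \<and>
     (\<forall>i\<in>{1..N}. legendre N (tau i) = 0)"

definition lagrange_basis :: "nat \<Rightarrow> (nat \<Rightarrow> real) \<Rightarrow> nat \<Rightarrow> real \<Rightarrow> real" where
  "lagrange_basis N tau j t = (\<Prod>k\<in>{0..N} - {j}. (t - tau k) / (tau j - tau k))"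

definition colloc_D :: "nat \<Rightarrow> (nat \<Rightarrow> real) \<Rightarrow> nat \<Rightarrow> nat \<Rightarrow> real" where
  "colloc_D N tau i j = deriv (lagrange_basis N tau j) (tau i)"

definition gauss_weight :: "nat \<Rightarrow> (nat \<Rightarrow> real) \<Rightarrow> nat \<Rightarrow> real" where
  "gauss_weight N tau i =
     integral {-1..1} (\<lambda>t. \<Prod>k\<in>{1..N} - {i}. (t - tau k) / (tau i - tau k))"

definition Ddag :: "nat \<Rightarrow> (nat \<Rightarrow> real) \<Rightarrow> nat \<Rightarrow> nat \<Rightarrow> real" where
  "Ddag N tau i j =
     (if j \<le> N then - (gauss_weight N tau j / gauss_weight N tau i) * colloc_D N tau j i
      else - (\<Sum>l\<in>{1..N}. - (gauss_weight N tau l / gauss_weight N tau i) * colloc_D N tau l i))"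

definition gradT_star ::
  "nat \<Rightarrow> (nat \<Rightarrow> real) \<Rightarrow>
   (nat \<Rightarrow> real^'n^'n) \<Rightarrow> (nat \<Rightarrow> real^'m^'n) \<Rightarrow> (nat \<Rightarrow> real^'n^'n) \<Rightarrow>
   (nat \<Rightarrow> real^'m^'n) \<Rightarrow> (nat \<Rightarrow> real^'m^'m) \<Rightarrow> real^'n^'n \<Rightarrow>
   (nat \<Rightarrow> real^'n) \<Rightarrow> (nat \<Rightarrow> real^'m) \<Rightarrow> (nat \<Rightarrow> real^'n) \<Rightarrow>
   (nat \<Rightarrow> real^'n) \<times> (real^'n) \<times> (nat \<Rightarrow> real^'n) \<times> (real^'n) \<times> (nat \<Rightarrow> real^'m)" where
  "gradT_star N tau A B Q S R T X U L =
     ((\<lambda>i. (\<Sum>j\<in>{1..N}. colloc_D N tau i j *\<^sub>R X j) - A i *v X i - B i *v U i),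
      X (N+1) - (\<Sum>j\<in>{1..N}. gauss_weight N tau j *\<^sub>R (A j *v X j + B j *v U j)),
      (\<lambda>i. (\<Sum>j\<in>{1..N+1}. Ddag N tau i j *\<^sub>R L j) + transpose (A i) *v L i
              + Q i *v X i + S i *v U i),
      L (N+1) - T *v X (N+1),
      (\<lambda>i. transpose (S i) *v X i + R i *v U i + transpose (B i) *v L i))"

definition y_norm :: "nat \<Rightarrow>
   (nat \<Rightarrow> real^'n) \<times> (real^'n) \<times> (nat \<Rightarrow> real^'n) \<times> (real^'n) \<times> (nat \<Rightarrow> real^'m) \<Rightarrow> real" where
  "y_norm N y = (case y of (y1, y2, y3, y4, y5) \<Rightarrow>
     Max ((\<lambda>i. norm (y1 i)) ` {1..N} \<union> {norm y2} \<union> (\<lambda>i. norm (y3 i)) ` {1..N}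
          \<union> {norm y4} \<union> (\<lambda>i. norm (y5 i)) ` {1..N}))"

definition blk_norm :: "nat set \<Rightarrow> (nat \<Rightarrow> 'a::real_normed_vector) \<Rightarrow> real" where
  "blk_norm I V = Max ((\<lambda>i. norm (V i)) ` I)"

definition mat_inf_norm :: "real^'c^'r \<Rightarrow> real" where
  "mat_inf_norm M = Max (range (\<lambda>i. \<Sum>j\<in>UNIV. \<bar>M $ i $ j\<bar>))"

definition mat_norm :: "real^'c^'r \<Rightarrow> real" where
  "mat_norm M = onorm (\<lambda>x. M *v x)"

definition eigs_gt :: "real^'k^'k \<Rightarrow> real \<Rightarrow> bool" where
  "eigs_gt M a \<longleftrightarrow> (\<forall>lam v. v \<noteq> 0 \<and> M *v v = lam *\<^sub>R v \<longrightarrow> a < lam)"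

definition block_QSR :: "real^'n^'n \<Rightarrow> real^'m^'n \<Rightarrow> real^'m^'m \<Rightarrow> real^('n + 'm)^('n + 'm)" where
  "block_QSR Q S R = (\<chi> a b. (case (a, b) of
       (Inl p, Inl q) \<Rightarrow> Q $ p $ q
     | (Inl p, Inr q) \<Rightarrow> S $ p $ q
     | (Inr p, Inl q) \<Rightarrow> S $ q $ p
     | (Inr p, Inr q) \<Rightarrow> R $ p $ q))"

definition is_inverse_N :: "nat \<Rightarrow> (nat \<Rightarrow> nat \<Rightarrow> real) \<Rightarrow> (nat \<Rightarrow> nat \<Rightarrow> real) \<Rightarrow> bool" where
  "is_inverse_N N M E \<longleftrightarrow>
     (\<forall>i\<in>{1..N}. \<forall>j\<in>{1..N}.
        (\<Sum>k\<in>{1..N}. M i k * E k j) = (if i = j then 1 else 0) \<and>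
        (\<Sum>k\<in>{1..N}. E i k * M k j) = (if i = j then 1 else 0))"

end

theory Submission
  imports Defs "HOL-Computational_Algebra.Polynomial"
begin

fun Leg :: "nat \<Rightarrow> real poly" where
  "Leg 0 = 1"
| "Leg (Suc 0) = [:0,1:]"
| "Leg (Suc (Suc k)) = smult (1/(real k + 2)) (smult (2 * real k + 3) ([:0,1:] * Leg (Suc k)) - smult (real k + 1) (Leg k))"

lemma poly_Leg: "poly (Leg n) x = legendre n x"
  by (induction n rule: Leg.induct) (auto simp: field_simps)

lemma Leg_deg_lead: "degree (Leg n) = n \<and> coeff (Leg n) n > 0"
proof (induction n rule: Leg.induct)
  case 1 then show ?case by simp
next
  case 2 then show ?case by simp
next
  case (3 k)
  let ?P = "smult (2 * real k + 3) ([:0,1:] * Leg (Suc k))"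
  have nz: "Leg (Suc k) \<noteq> 0" using 3 by (metis coeff_0 less_irrefl)
  have dP: "degree ?P = Suc (Suc k)" using 3 nz by (simp add: degree_mult_eq)
  have cP: "coeff ?P (Suc (Suc k)) = (2 * real k + 3) * coeff (Leg (Suc k)) (Suc k)"
    by simp
  have dk: "degree (smult (real k + 1) (Leg k)) < Suc (Suc k)" using 3 by simp
  have d2: "degree (?P - smult (real k + 1) (Leg k)) = Suc (Suc k)"
    using dP dk degree_add_eq_left[of "- smult (real k + 1) (Leg k)" ?P] by (simp del: degree_smult_eq)
  have c2: "coeff (?P - smult (real k + 1) (Leg k)) (Suc (Suc k)) = (2 * real k + 3) * coeff (Leg (Suc k)) (Suc k)"
    using cP dk by (simp add: coeff_eq_0)
  show ?case using d2 c2 3 by (simp add: add_pos_pos)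
qed

lemma legendre_fun: "legendre n = poly (Leg n)"
  by (rule ext) (simp add: poly_Leg)

lemma legendre_neg: "legendre n (-x) = (-1)^n * legendre n x"
  by (induction n rule: Leg.induct) (auto simp: field_simps)

lemma cont_leg[continuous_intros]: "continuous_on S f \<Longrightarrow> continuous_on S (\<lambda>x. legendre n (f x))"
  unfolding legendre_fun by (intro continuous_intros)

lemma int_poly: "(\<lambda>x. poly p x) integrable_on {a..b::real}"
  by (rule integrable_continuous_real) (intro continuous_intros)

lemma int_mom: "(\<lambda>x. x^k * legendre n x) integrable_on {a..b::real}"
  by (rule integrable_continuous_real) (intro continuous_intros)

lemma integral_reflect11: "integral {-1..1} (\<lambda>x. f (-x)) = integral {-1..1::real} f"
proof -
  have "integral {-1..1} (\<lambda>x. f (-x)) = integral {- 1..- (-1)} (\<lambda>x. f (-x))" by simp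
  also have "\<dots> = integral {-1..1::real} f" by (rule Henstock_Kurzweil_Integration.integral_reflect_real)
  finally show ?thesis .
qed

lemma integral_odd_zero:
  fixes f :: "real \<Rightarrow> real"
  assumes "\<And>x. f (-x) = - f x"
  shows "integral {-1..1::real} f = 0"
proof -
  have "integral {-1..1} f = integral {-1..1} (\<lambda>x. f (-x))" by (simp add: integral_reflect11)
  also have "\<dots> = integral {-1..1} (\<lambda>x. - f x)" by (simp add: assms)
  also have "\<dots> = - integral {-1..1} f" by (rule integral_neg)
  finally show ?thesis by simp
qed

lemma integral_monom: "integral {-1..1::real} (\<lambda>x. x^k) = (if even k then 2 / (real k + 1) else 0)"
proof -
  have "((\<lambda>x. x^k) has_integral ((1::real)^Suc k / Suc k - (-1)^Suc k / Suc k)) {-1..1}"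
  proof (rule fundamental_theorem_of_calculus)
    fix x :: real
    have "((\<lambda>x. x^Suc k / Suc k) has_real_derivative (real (Suc k) * x ^ (Suc k - Suc 0)) / Suc k) (at x)"
      by (intro DERIV_cdivide DERIV_pow)
    then have "((\<lambda>x. x^Suc k / Suc k) has_real_derivative x^k) (at x)"
      by (simp del: of_nat_Suc)
    then show "((\<lambda>x. x^Suc k / Suc k) has_vector_derivative x^k) (at x within {-1..1})"
      by (simp add: has_real_derivative_iff_has_vector_derivative has_vector_derivative_at_within)
  qed simp
  then show ?thesis by (auto simp: integral_unique)
qed

definition mI :: "nat \<Rightarrow> nat \<Rightarrow> real" where
  "mI n k = integral {-1..1} (\<lambda>x. x^k * legendre n x)"

lemma mI_odd: "odd (n + k) \<Longrightarrow> mI n k = 0"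
  unfolding mI_def by (rule integral_odd_zero) (auto simp: legendre_neg power_minus' )

lemma mI_rec: "mI (Suc (Suc n)) k = ((2 * real n + 3) * mI (Suc n) (Suc k) - (real n + 1) * mI n k) / (real n + 2)"
proof -
  have e: "(\<lambda>x. x^k * legendre (Suc (Suc n)) x) = (\<lambda>x. ((2 * real n + 3) * (x^(Suc k) * legendre (Suc n) x) - (real n + 1) * (x^k * legendre n x)) / (real n + 2))"
    by (rule ext) (simp add: field_simps)
  have i1: "(\<lambda>x. (2 * real n + 3) * (x^(Suc k) * legendre (Suc n) x)) integrable_on {-1..1}"
    by (rule integrable_continuous_real) (intro continuous_intros)
  have i2: "(\<lambda>x. (real n + 1) * (x^k * legendre n x)) integrable_on {-1..1}"
    by (rule integrable_continuous_real) (intro continuous_intros)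
  show ?thesis unfolding mI_def e
    by (simp only: integral_divide integral_diff[OF i1 i2] integral_mult_right)
qed

definition mom :: "nat \<Rightarrow> nat \<Rightarrow> real" where
  "mom n j = 2^(n+1) * fact (n+2*j) * fact (n+j) / (fact j * fact (2*n+2*j+1))"

lemma mom_alg:
  fixes n j :: real
  assumes "n \<ge> 0" "j \<ge> 0"
  shows "(2*n+3) * (2*(n+2*j+3)*(n+j+2)/((j+1)*(2*n+2*j+5)*(2*n+2*j+4))) - (n+1) * (1/(j+1))
       = (n+2) * (4*(n+j+2)/((2*n+2*j+5)*(2*n+2*j+4)))"
proof -
  have "j+1 > 0" "2*n+2*j+5 > 0" "2*n+2*j+4 > 0" using assms by auto
  then show ?thesis by (simp add: divide_simps) (simp add: algebra_simps)
qed

lemma mom_step: "(2 * real n + 3) * mom (Suc n) (Suc j) - (real n + 1) * mom n (Suc j) = (real n + 2) * mom (Suc (Suc n)) j"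
proof -
  define A :: real where "A = fact (n+2*j+2)"
  define B :: real where "B = fact (n+j+1)"
  define C :: real where "C = fact j"
  define G :: real where "G = fact (2*n+2*j+3)"
  define K where "K = 2^(n+1) * A * B / (C * G)"
  have e1: "Suc n + 2 * Suc j = Suc (n+2*j+2)" "Suc n + Suc j = Suc (n+j+1)"
     "2 * Suc n + 2 * Suc j + 1 = Suc (Suc (2*n+2*j+3))" by simp_all
  have e2: "n + 2 * Suc j = n+2*j+2" "n + Suc j = n+j+1" "2 * n + 2 * Suc j + 1 = 2*n+2*j+3" by simp_all
  have e3: "Suc (Suc n) + 2 * j = n+2*j+2" "Suc (Suc n) + j = Suc (n+j+1)"
     "2 * Suc (Suc n) + 2 * j + 1 = Suc (Suc (2*n+2*j+3))" by simp_all
  have m1: "mom (Suc n) (Suc j) = K * (2*(real n+2*real j+3)*(real n+real j+2)/((real j+1)*(2*real n+2*real j+5)*(2*real n+2*real j+4)))"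
    unfolding mom_def e1 K_def A_def B_def C_def G_def fact_Suc
    by (simp add: field_simps)
  have m2: "mom n (Suc j) = K * (1/(real j+1))"
    unfolding mom_def e2 K_def A_def B_def C_def G_def fact_Suc
    by (simp add: field_simps)
  have m3: "mom (Suc (Suc n)) j = K * (4*(real n+real j+2)/((2*real n+2*real j+5)*(2*real n+2*real j+4)))"
    unfolding mom_def e3 K_def A_def B_def C_def G_def fact_Suc
    by (simp add: field_simps)
  have "(2 * real n + 3) * mom (Suc n) (Suc j) - (real n + 1) * mom n (Suc j)
      = K * ((2*real n+3) * (2*(real n+2*real j+3)*(real n+real j+2)/((real j+1)*(2*real n+2*real j+5)*(2*real n+2*real j+4))) - (real n+1) * (1/(real j+1)))"
    unfolding m1 m2 by (simp add: algebra_simps)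
  also have "\<dots> = K * ((real n+2) * (4*(real n+real j+2)/((2*real n+2*real j+5)*(2*real n+2*real j+4))))"
    by (subst mom_alg) auto
  also have "\<dots> = (real n + 2) * mom (Suc (Suc n)) j" unfolding m3 by simp
  finally show ?thesis .
qed

lemma mom0: "mom 0 j = 2 / (2 * real j + 1)"
proof -
  have f: "fact (2*j+1) = (2*real j+1) * (fact (2*j) :: real)" by simp
  have p: "(fact (2*j) :: real) \<noteq> 0" "(fact j :: real) \<noteq> 0" "2*real j+1 \<noteq> 0" by auto
  have "mom 0 j = 2 * fact (2*j) * fact j / (fact j * ((2*real j+1) * fact (2*j)))"
    unfolding mom_def f[symmetric] by simp
  also have "\<dots> = 2 / (2 * real j + 1)" using p by (simp add: divide_simps)
  finally show ?thesis .
qed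

lemma mom1: "mom 1 j = 2 / (2 * real j + 3)"
proof -
  have a: "1 + 2*j = 2*j+1" "2 + 2 * j + 1 = 2*j+3" "1 + j = j+1" by simp_all
  have f1: "fact (2*j+1) = (2*real j+1) * (fact (2*j) :: real)" by simp
  have f3: "fact (2*j+3) = (2*real j+3) * (2*real j + 2) * ((2*real j+1) * (fact (2*j) :: real))"
  proof -
    have e: "2*j+3 = Suc (Suc (Suc (2*j)))" by simp
    show ?thesis unfolding e fact_Suc by (simp add: algebra_simps)
  qed
  have fj: "fact (j+1) = (real j+1) * (fact j :: real)" by simp
  have p: "(fact (2*j) :: real) \<noteq> 0" "(fact j :: real) \<noteq> 0" "2*real j+1 \<noteq> 0" "2*real j+3 \<noteq> 0" "2*real j+2 \<noteq> 0" by auto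
  have "mom 1 j = 4 * ((2*real j+1) * fact (2*j)) * ((real j+1) * fact j) / (fact j * ((2*real j+3) * (2*real j + 2) * ((2*real j+1) * (fact (2*j)))))"
    unfolding mom_def a f1[symmetric] f3[symmetric] fj[symmetric] by (simp add: algebra_simps)
  also have "\<dots> = 2 / (2 * real j + 3)" using p by (simp add: divide_simps)
  finally show ?thesis .
qed

lemma mI_main: "(\<forall>j. mI n (n+2*j) = mom n j) \<and> (\<forall>k<n. mI n k = 0)"
proof (induction n rule: Leg.induct)
  case 1
  show ?case
  proof (intro conjI allI)
    fix j
    have "mI 0 (0 + 2*j) = integral {-1..1} (\<lambda>x::real. x^(2*j))" unfolding mI_def by simp
    also have "\<dots> = 2 / (2 * real j + 1)" by (simp add: integral_monom)
    finally show "mI 0 (0 + 2*j) = mom 0 j" by (simp add: mom0)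
  qed simp
next
  case 2
  show ?case
  proof (intro conjI allI impI)
    fix j
    have "mI 1 (1 + 2*j) = integral {-1..1} (\<lambda>x::real. x^(2*j+2))" unfolding mI_def
      by (simp add: power2_eq_square algebra_simps)
    also have "\<dots> = 2 / (2 * real j + 3)" using integral_monom[of "2*j+2"] by simp
    finally show "mI (Suc 0) (Suc 0 + 2*j) = mom (Suc 0) j" using mom1 by simp
  next
    fix k assume "k < Suc 0"
    then show "mI (Suc 0) k = 0" by (simp add: mI_odd)
  qed
next
  case (3 n)
  show ?case
  proof (intro conjI allI impI)
    fix j
    have "mI (Suc (Suc n)) (Suc (Suc n) + 2 * j) = ((2 * real n + 3) * mI (Suc n) (Suc n + 2 * Suc j) - (real n + 1) * mI n (n + 2 * Suc j)) / (real n + 2)"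
      by (simp add: mI_rec)
    also have "\<dots> = ((2 * real n + 3) * mom (Suc n) (Suc j) - (real n + 1) * mom n (Suc j)) / (real n + 2)"
    proof -
      have "mI (Suc n) (Suc n + 2 * Suc j) = mom (Suc n) (Suc j)" using 3 by blast
      moreover have "mI n (n + 2 * Suc j) = mom n (Suc j)" using 3 by blast
      ultimately show ?thesis by simp
    qed
    also have "\<dots> = mom (Suc (Suc n)) j" by (simp add: mom_step)
    finally show "mI (Suc (Suc n)) (Suc (Suc n) + 2 * j) = mom (Suc (Suc n)) j" .
  next
    fix k assume k: "k < Suc (Suc n)"
    show "mI (Suc (Suc n)) k = 0"
    proof (cases "k < n")
      case True
      then show ?thesis using 3 by (simp add: mI_rec)
    next
      case False
      then consider "k = n" | "k = Suc n" using k by linarith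
      then show ?thesis
      proof cases
        case 1
        have "mI (Suc n) (Suc k) = mom (Suc n) 0" using 3 1 by (metis add_0_right mult_zero_right)
        moreover have "mI n k = mom n 0" using 3 1 by (metis add_0_right mult_zero_right)
        moreover have "(2 * real n + 3) * mom (Suc n) 0 = (real n + 1) * mom n 0"
        proof -
          define F :: real where "F = fact n"
          define G :: real where "G = fact (2*n+1)"
          have p: "F \<noteq> 0" "G \<noteq> 0" "2*real n+3 \<noteq> 0" "2*real n+2 \<noteq> 0" unfolding F_def G_def by auto
          have e: "2 * Suc n + 1 = Suc (Suc (2*n+1))" by simp
          have m1: "mom (Suc n) 0 = 2^(n+2) * ((real n+1) * F) * ((real n+1) * F) / ((2*real n+3) * (2*real n+2) * G)"
            unfolding mom_def e fact_Suc F_def G_def by (simp add: algebra_simps)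
          have m2: "mom n 0 = 2^(n+1) * F * F / G" unfolding mom_def F_def G_def by simp
          show ?thesis unfolding m1 m2 using p by (simp add: divide_simps)
        qed
        ultimately show ?thesis by (simp add: mI_rec 1)
      next
        case 2
        then show ?thesis by (simp add: mI_odd)
      qed
    qed
  qed
qed

lemma mI_zero: "k < n \<Longrightarrow> mI n k = 0"
  using mI_main by blast

lemma integral_poly_sum:
  "integral {-1..1} (\<lambda>x. poly q x * legendre n x) = (\<Sum>i\<le>degree q. coeff q i * mI n i)"
proof -
  have "(\<lambda>x. poly q x * legendre n x) = (\<lambda>x. \<Sum>i\<le>degree q. coeff q i * (x^i * legendre n x))"
    by (rule ext) (simp add: poly_altdef sum_distrib_right mult.assoc)
  then have "integral {-1..1} (\<lambda>x. poly q x * legendre n x) = (\<Sum>i\<le>degree q. integral {-1..1} (\<lambda>x. coeff q i * (x^i * legendre n x)))"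
  proof -
    assume e: "(\<lambda>x. poly q x * legendre n x) = (\<lambda>x. \<Sum>i\<le>degree q. coeff q i * (x^i * legendre n x))"
    have "\<And>i. (\<lambda>x. coeff q i * (x^i * legendre n x)) integrable_on {-1..1}"
      by (rule integrable_continuous_real) (intro continuous_intros)
    then show ?thesis unfolding e by (subst integral_sum) auto
  qed
  also have "\<dots> = (\<Sum>i\<le>degree q. coeff q i * mI n i)"
    by (simp add: mI_def)
  finally show ?thesis .
qed

lemma legendre_orth:
  assumes "degree q < n"
  shows "integral {-1..1} (\<lambda>x. poly q x * legendre n x) = 0"
  unfolding integral_poly_sum using assms by (auto intro!: sum.neutral simp: mI_zero)


locale gauss =
  fixes N :: nat and tau :: "nat \<Rightarrow> real"
  assumes N1: "N \<ge> 1" and gn: "gauss_nodes N tau"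
begin

lemma tau0: "tau 0 = -1" using gn by (simp add: gauss_nodes_def)

lemma tau_step: "i < N \<Longrightarrow> tau i < tau (Suc i)"
  using gn unfolding gauss_nodes_def by (cases "i = 0") auto

lemma tau_mono: "i < j \<Longrightarrow> j \<le> N \<Longrightarrow> tau i < tau j"
proof (induction j)
  case 0 then show ?case by simp
next
  case (Suc j)
  then show ?case using tau_step[of j] by (cases "i = j") auto
qed

lemma tau_inj: "i \<le> N \<Longrightarrow> j \<le> N \<Longrightarrow> tau i = tau j \<longleftrightarrow> i = j"
  by (metis linorder_neqE_nat order_less_irrefl tau_mono)

lemma tau_le_iff: "i \<le> N \<Longrightarrow> j \<le> N \<Longrightarrow> tau i < tau j \<longleftrightarrow> i < j"
  by (metis linorder_neqE_nat order_less_asym tau_mono)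

lemma tau_root: "i \<in> {1..N} \<Longrightarrow> legendre N (tau i) = 0"
  using gn by (simp add: gauss_nodes_def)

lemma tau_range: "i \<in> {1..N} \<Longrightarrow> -1 < tau i \<and> tau i < 1"
proof -
  assume i: "i \<in> {1..N}"
  have "tau 1 \<le> tau i" using i tau_mono[of 1 i] by (cases "i = 1") auto
  moreover have "tau i \<le> tau N" using i tau_mono[of i N] by (cases "i = N") auto
  ultimately show ?thesis using gn by (auto simp: gauss_nodes_def)
qed

lemma Leg_nz: "Leg N \<noteq> 0" using Leg_deg_lead[of N] by (metis coeff_0 less_irrefl)

lemma all_roots:
  assumes "legendre N x = 0" shows "\<exists>i\<in>{1..N}. x = tau i"
proof -
  let ?Z = "{x. poly (Leg N) x = 0}"
  have fin: "finite ?Z" using poly_roots_finite[OF Leg_nz] .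
  have cZ: "card ?Z \<le> N" using card_poly_roots_bound[OF Leg_nz] Leg_deg_lead[of N] by simp
  have sub: "tau ` {1..N} \<subseteq> ?Z" using tau_root by (auto simp: poly_Leg)
  have inj: "inj_on tau {1..N}" by (rule inj_onI) (auto simp: tau_inj)
  have cT: "card (tau ` {1..N}) = N" using card_image[OF inj] by simp
  have "tau ` {1..N} = ?Z" using card_seteq[OF fin sub] cZ cT by simp
  then show ?thesis using assms by (auto simp: poly_Leg)
qed

definition sig :: "nat \<Rightarrow> nat" where
  "sig i = (SOME j. j \<in> {1..N} \<and> tau j = - tau i)"

lemma sig: "i \<in> {1..N} \<Longrightarrow> sig i \<in> {1..N} \<and> tau (sig i) = - tau i"
proof -
  assume i: "i \<in> {1..N}"
  have "legendre N (- tau i) = 0" using tau_root[OF i] by (simp add: legendre_neg)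
  then have ex: "\<exists>j. j \<in> {1..N} \<and> tau j = - tau i" using all_roots by force
  from someI_ex[OF ex] show ?thesis unfolding sig_def .
qed

lemma sig_dec: "i \<in> {1..N} \<Longrightarrow> i' \<in> {1..N} \<Longrightarrow> i < i' \<Longrightarrow> sig i' < sig i"
proof -
  assume a: "i \<in> {1..N}" "i' \<in> {1..N}" "i < i'"
  have "tau i < tau i'" using a tau_mono by auto
  then have t: "tau (sig i') < tau (sig i)" using sig a by auto
  have "sig i \<le> N" "sig i' \<le> N" using sig a by auto
  then show ?thesis using t tau_le_iff by blast
qed

lemma sig_upper: "i \<in> {1..N} \<Longrightarrow> sig i \<le> N + 1 - i"
proof (induction i)
  case 0 then show ?case by simp
next
  case (Suc i)
  show ?case
  proof (cases "i = 0")
    case True then show ?thesis using sig[of 1] N1 by auto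
  next
    case False
    then have "sig (Suc i) < sig i" using sig_dec[of i "Suc i"] Suc by auto
    then show ?thesis using Suc False by auto
  qed
qed

lemma sig_lower: "d < N \<Longrightarrow> sig (N - d) \<ge> d + 1"
proof (induction d)
  case 0 then show ?case using sig[of N] N1 by auto
next
  case (Suc d)
  then have "sig (N - d) < sig (N - Suc d)" using sig_dec[of "N - Suc d" "N - d"] by auto
  then show ?case using Suc by auto
qed

lemma sig_eq: "i \<in> {1..N} \<Longrightarrow> sig i = N + 1 - i"
proof -
  assume i: "i \<in> {1..N}"
  have "sig (N - (N - i)) \<ge> N - i + 1" using sig_lower[of "N - i"] i by auto
  then have "sig i \<ge> N + 1 - i" using i by auto
  then show ?thesis using sig_upper[OF i] by simp
qed

lemma tau_refl: "i \<in> {1..N} \<Longrightarrow> tau (N + 1 - i) = - tau i"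
  using sig sig_eq by metis

definition lagp :: "nat set \<Rightarrow> nat \<Rightarrow> real poly" where
  "lagp S j = (\<Prod>k\<in>S - {j}. smult (1 / (tau j - tau k)) [:- tau k, 1:])"

lemma poly_lagp: "poly (lagp S j) t = (\<Prod>k\<in>S - {j}. (t - tau k) / (tau j - tau k))"
  unfolding lagp_def poly_prod by (rule prod.cong) (auto simp: diff_divide_distrib)

lemma degree_lagp: "finite S \<Longrightarrow> degree (lagp S j) \<le> card (S - {j})"
proof -
  assume f: "finite S"
  have "degree (lagp S j) \<le> sum (degree \<circ> (\<lambda>k. smult (1 / (tau j - tau k)) [:- tau k, 1:])) (S - {j})"
    unfolding lagp_def using f by (intro degree_prod_sum_le) auto
  also have "\<dots> \<le> sum (\<lambda>k. 1) (S - {j})" by (intro sum_mono) auto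
  finally show ?thesis by simp
qed

lemma lag_val:
  assumes "S \<subseteq> {0..N}" "j \<in> S" "k \<in> S"
  shows "(\<Prod>m\<in>S - {j}. (tau k - tau m) / (tau j - tau m)) = (if j = k then 1 else 0)"
proof (cases "j = k")
  case True
  have "(\<Prod>m\<in>S - {j}. (tau k - tau m) / (tau j - tau m)) = (\<Prod>m\<in>S - {j}. 1)"
  proof (rule prod.cong)
    fix m assume m: "m \<in> S - {j}"
    then have "j \<le> N" "m \<le> N" using assms by auto
    then have "tau j \<noteq> tau m" using tau_inj m by auto
    then show "(tau k - tau m) / (tau j - tau m) = 1" using True by simp
  qed simp
  then show ?thesis using True by simp
next
  case False
  have "finite S" using assms finite_subset by blast
  then have "(\<Prod>m\<in>S - {j}. (tau k - tau m) / (tau j - tau m)) = 0"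
    using False assms by (intro prod_zero) (auto intro!: bexI[of _ k])
  then show ?thesis using False by simp
qed

abbreviation LB :: "nat \<Rightarrow> real poly" where "LB j \<equiv> lagp {0..N} j"
abbreviation lb :: "nat \<Rightarrow> real poly" where "lb j \<equiv> lagp {1..N} j"

lemma LB_fun: "lagrange_basis N tau j = poly (LB j)"
  by (rule ext) (simp add: lagrange_basis_def poly_lagp)

lemma LB_val: "j \<le> N \<Longrightarrow> k \<le> N \<Longrightarrow> poly (LB j) (tau k) = (if j = k then 1 else 0)"
  unfolding poly_lagp by (rule lag_val) auto

lemma lb_val: "j \<in> {1..N} \<Longrightarrow> k \<in> {1..N} \<Longrightarrow> poly (lb j) (tau k) = (if j = k then 1 else 0)"
  unfolding poly_lagp by (rule lag_val) auto

lemma LB_deg: "j \<le> N \<Longrightarrow> degree (LB j) \<le> N"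
  using degree_lagp[of "{0..N}" j] by simp

lemma lb_deg: "j \<in> {1..N} \<Longrightarrow> degree (lb j) \<le> N - 1"
  using degree_lagp[of "{1..N}" j] by simp

lemma gw_def: "gauss_weight N tau i = integral {-1..1} (\<lambda>t. poly (lb i) t)"
  unfolding gauss_weight_def by (simp add: poly_lagp)

lemma colloc_D_poly: "colloc_D N tau i j = poly (pderiv (LB j)) (tau i)"
  unfolding colloc_D_def LB_fun by (rule DERIV_imp_deriv) (rule poly_DERIV)

lemma tau_inj_on: "inj_on tau {1..N}"
  by (rule inj_onI) (auto simp: tau_inj)

lemma zero_if_roots:
  assumes "degree s \<le> N - 1" "\<And>i. i \<in> {1..N} \<Longrightarrow> poly s (tau i) = 0"
  shows "s = 0"
proof (rule ccontr)
  assume nz: "s \<noteq> 0"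
  have sub: "tau ` {1..N} \<subseteq> {x. poly s x = 0}" using assms by auto
  have "N = card (tau ` {1..N})" using card_image[OF tau_inj_on] by simp
  also have "\<dots> \<le> card {x. poly s x = 0}" using card_mono[OF poly_roots_finite[OF nz] sub] .
  also have "\<dots> \<le> degree s" using card_poly_roots_bound[OF nz] .
  finally show False using assms N1 by linarith
qed

lemma interp:
  assumes "degree r \<le> N - 1"
  shows "poly r x = (\<Sum>k\<in>{1..N}. poly r (tau k) * poly (lb k) x)"
proof -
  define s where "s = r - (\<Sum>k\<in>{1..N}. smult (poly r (tau k)) (lb k))"
  have d: "degree s \<le> N - 1" unfolding s_def
  proof (rule degree_diff_le[OF assms])
    show "degree (\<Sum>k\<in>{1..N}. smult (poly r (tau k)) (lb k)) \<le> N - 1"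
    proof (rule degree_sum_le)
      fix k assume "k \<in> {1..N}"
      then show "degree (smult (poly r (tau k)) (lb k)) \<le> N - 1"
        using lb_deg degree_smult_le order_trans by blast
    qed simp
  qed
  have z: "poly s (tau i) = 0" if i: "i \<in> {1..N}" for i
  proof -
    have "(\<Sum>k\<in>{1..N}. poly r (tau k) * poly (lb k) (tau i)) = (\<Sum>k\<in>{1..N}. if k = i then poly r (tau k) else 0)"
    proof (rule sum.cong)
      fix k assume k: "k \<in> {1..N}"
      show "poly r (tau k) * poly (lb k) (tau i) = (if k = i then poly r (tau k) else 0)"
        using lb_val[OF k i] by simp
    qed simp
    also have "\<dots> = poly r (tau i)" using i by simp
    finally show ?thesis unfolding s_def by (simp add: poly_sum)
  qed
  have "s = 0" using zero_if_roots[OF d z] by blast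
  then have "poly r x = poly (\<Sum>k\<in>{1..N}. smult (poly r (tau k)) (lb k)) x" unfolding s_def by simp
  then show ?thesis by (simp only: poly_sum poly_smult)
qed

abbreviation w :: "nat \<Rightarrow> real" where "w i \<equiv> gauss_weight N tau i"

lemma int_lb: "integral {-1..1} (\<lambda>x. c * poly (lb k) x) = c * w k"
  by (simp add: gw_def)

lemma quad_low:
  assumes "degree r \<le> N - 1"
  shows "integral {-1..1} (\<lambda>x. poly r x) = (\<Sum>k\<in>{1..N}. w k * poly r (tau k))"
proof -
  have "integral {-1..1} (\<lambda>x. poly r x) = integral {-1..1} (\<lambda>x. \<Sum>k\<in>{1..N}. poly r (tau k) * poly (lb k) x)"
  proof -
    have "(\<lambda>x. poly r x) = (\<lambda>x. \<Sum>k\<in>{1..N}. poly r (tau k) * poly (lb k) x)"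
      by (rule ext) (rule interp[OF assms])
    then show ?thesis by (rule arg_cong)
  qed
  also have "\<dots> = (\<Sum>k\<in>{1..N}. integral {-1..1} (\<lambda>x. poly r (tau k) * poly (lb k) x))"
  proof (rule integral_sum)
    fix k
    show "(\<lambda>x. poly r (tau k) * poly (lb k) x) integrable_on {-1..1}"
      by (rule integrable_continuous_real) (intro continuous_intros)
  qed simp
  also have "\<dots> = (\<Sum>k\<in>{1..N}. w k * poly r (tau k))"
    by (rule sum.cong) (simp_all only: int_lb mult.commute)
  finally show ?thesis .
qed

lemma quad_exact:
  assumes "degree p \<le> 2 * N - 1"
  shows "integral {-1..1} (\<lambda>x. poly p x) = (\<Sum>k\<in>{1..N}. w k * poly p (tau k))"
proof -
  define L where "L = Leg N"
  define q where "q = p div L"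
  define r where "r = p mod L"
  have dL: "degree L = N" unfolding L_def using Leg_deg_lead by blast
  have pe: "p = q * L + r" unfolding q_def r_def by simp
  have Lnz: "L \<noteq> 0" unfolding L_def by (rule Leg_nz)
  have dr: "degree r \<le> N - 1"
    using degree_mod_less[OF Lnz, of p] dL unfolding r_def by auto
  have dq: "degree q < N"
  proof (cases "q = 0")
    case True then show ?thesis using N1 by simp
  next
    case False
    have dqL: "degree (q * L) = degree q + N" using False Lnz dL by (simp add: degree_mult_eq)
    have "degree r < degree (q * L)" using dr dqL N1 by linarith
    then have "degree p = degree q + N" using pe dqL degree_add_eq_left[of r "q * L"] by simp
    then show ?thesis using assms N1 by arith
  qed
  have "integral {-1..1} (\<lambda>x. poly p x) = integral {-1..1} (\<lambda>x. poly q x * legendre N x + poly r x)"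
  proof -
    have "(\<lambda>x. poly p x) = (\<lambda>x. poly q x * legendre N x + poly r x)"
      by (rule ext) (subst pe, simp add: L_def poly_Leg)
    then show ?thesis by (rule arg_cong)
  qed
  also have "\<dots> = integral {-1..1} (\<lambda>x. poly q x * legendre N x) + integral {-1..1} (\<lambda>x. poly r x)"
    by (rule integral_add) (auto intro!: integrable_continuous_real continuous_intros)
  also have "\<dots> = (\<Sum>k\<in>{1..N}. w k * poly r (tau k))"
    using legendre_orth[OF dq] quad_low[OF dr] by simp
  also have "\<dots> = (\<Sum>k\<in>{1..N}. w k * poly p (tau k))"
    by (rule sum.cong) (auto simp: pe L_def poly_Leg tau_root)
  finally show ?thesis .
qed

lemma sum_delta1: "j \<in> {1..N} \<Longrightarrow> (\<Sum>k\<in>{1..N}. f k * (if j = k then 1 else 0)) = (f j :: real)"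
proof -
  assume j: "j \<in> {1..N}"
  have "(\<Sum>k\<in>{1..N}. f k * (if j = k then 1 else 0)) = (\<Sum>k\<in>{1..N}. if k = j then f k else 0)"
    by (rule sum.cong) auto
  also have "\<dots> = f j" using j by simp
  finally show ?thesis .
qed

lemma w_pos: "i \<in> {1..N} \<Longrightarrow> w i > 0"
proof -
  assume i: "i \<in> {1..N}"
  have d: "degree (lb i * lb i) \<le> 2 * N - 1"
    using degree_mult_le[of "lb i" "lb i"] lb_deg[OF i] N1 by arith
  have "integral {-1..1} (\<lambda>x. poly (lb i * lb i) x) = (\<Sum>k\<in>{1..N}. w k * poly (lb i * lb i) (tau k))"
    by (rule quad_exact[OF d])
  also have "\<dots> = (\<Sum>k\<in>{1..N}. w k * (if i = k then 1 else 0))"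
  proof (rule sum.cong)
    fix k assume k: "k \<in> {1..N}"
    show "w k * poly (lb i * lb i) (tau k) = w k * (if i = k then 1 else 0)" using lb_val[OF i k] by simp
  qed simp
  also have "\<dots> = w i" by (rule sum_delta1[OF i])
  finally have e: "integral {-1..1} (\<lambda>x. poly (lb i * lb i) x) = w i" .
  have int: "(\<lambda>x. poly (lb i * lb i) x) integrable_on {-1..1}" by (rule int_poly)
  have nn: "0 \<le> integral {-1..1} (\<lambda>x. poly (lb i * lb i) x)"
    by (rule integral_nonneg[OF int]) simp
  have "w i \<noteq> 0"
  proof
    assume "w i = 0"
    then have hi: "((\<lambda>x. poly (lb i * lb i) x) has_integral 0) (cbox (-1) 1)"
      using e int by (metis cbox_interval has_integral_integral)
    have "poly (lb i * lb i) (tau i) = 0"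
    proof (rule has_integral_0_cbox_imp_0[OF _ _ hi])
      show "continuous_on (cbox (-1) 1) (\<lambda>x. poly (lb i * lb i) x)" by (intro continuous_intros)
      show "box (-1) (1::real) \<noteq> {}" by simp
      show "tau i \<in> cbox (-1) 1" using tau_range[OF i] by simp
    qed simp
    then show False using lb_val[OF i i] by simp
  qed
  then show ?thesis using nn e by simp
qed

lemma w_sum: "(\<Sum>k\<in>{1..N}. w k) = 2"
proof -
  have "integral {-1..1} (\<lambda>x. poly (1::real poly) x) = (\<Sum>k\<in>{1..N}. w k * poly 1 (tau k))"
    by (rule quad_low) simp
  then show ?thesis by simp
qed

lemma refl_idx: "i \<in> {1..N} \<Longrightarrow> N + 1 - i \<in> {1..N}" by auto

lemma w_sym: "i \<in> {1..N} \<Longrightarrow> w (N + 1 - i) = w i"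
proof -
  assume i: "i \<in> {1..N}"
  define ib where "ib = N + 1 - i"
  have ib: "ib \<in> {1..N}" using i unfolding ib_def by auto
  define r where "r = pcompose (lb ib) [:0,-1:]"
  have pr: "poly r x = poly (lb ib) (-x)" for x unfolding r_def by (simp add: poly_pcompose)
  have dr: "degree r \<le> N - 1" unfolding r_def using lb_deg[OF ib] by (simp add: degree_pcompose)
  have "w ib = integral {-1..1} (\<lambda>x. poly (lb ib) x)" by (rule gw_def)
  also have "\<dots> = integral {-1..1} (\<lambda>x. poly (lb ib) (-x))" by (rule integral_reflect11[symmetric])
  also have "\<dots> = integral {-1..1} (\<lambda>x. poly r x)" by (simp add: pr)
  also have "\<dots> = (\<Sum>k\<in>{1..N}. w k * poly r (tau k))" by (rule quad_low[OF dr])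
  also have "\<dots> = (\<Sum>k\<in>{1..N}. w k * (if i = k then 1 else 0))"
  proof (rule sum.cong)
    fix k assume k: "k \<in> {1..N}"
    have "poly r (tau k) = poly (lb ib) (tau (N + 1 - k))" using pr tau_refl[OF k] by simp
    also have "\<dots> = (if i = k then 1 else 0)" using lb_val[OF ib refl_idx[OF k]] i k unfolding ib_def by auto
    finally show "w k * poly r (tau k) = w k * (if i = k then 1 else 0)" by simp
  qed simp
  also have "\<dots> = w i" by (rule sum_delta1[OF i])
  finally show ?thesis unfolding ib_def .
qed

lemma ftc_poly: "integral {-1..1} (\<lambda>x. poly (pderiv P) x) = poly P 1 - poly P (-1::real)"
proof -
  have "((\<lambda>x. poly (pderiv P) x) has_integral (poly P 1 - poly P (-1))) {-1..1}"
  proof (rule fundamental_theorem_of_calculus[of "-1" 1 "poly P" "poly (pderiv P)"])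
    fix x :: real
    show "((poly P) has_vector_derivative poly (pderiv P) x) (at x within {-1..1})"
      using poly_DERIV[of P x]
      by (simp add: has_real_derivative_iff_has_vector_derivative has_vector_derivative_at_within)
  qed simp
  then show ?thesis by (rule integral_unique)
qed

lemma D_refl:
  assumes i: "i \<in> {1..N}" and j: "j \<in> {1..N}"
  shows "w j * colloc_D N tau j i = w i * colloc_D N tau (N + 1 - i) (N + 1 - j)"
proof -
  define ib where "ib = N + 1 - i"
  define jb where "jb = N + 1 - j"
  have ib: "ib \<in> {1..N}" using i unfolding ib_def by auto
  have jb: "jb \<in> {1..N}" using j unfolding jb_def by auto
  define Li where "Li = LB i"
  define M where "M = pcompose (LB jb) [:0,-1:]"
  have pM: "poly M x = poly (LB jb) (-x)" for x unfolding M_def by (simp add: poly_pcompose)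
  have dM: "pderiv M = pcompose (pderiv (LB jb)) [:0,-1:] * [:-1:]"
    unfolding M_def by (simp add: pderiv_pcompose pderiv_pCons)
  have pdM: "poly (pderiv M) x = - poly (pderiv (LB jb)) (-x)" for x
    unfolding dM by (simp add: poly_pcompose)
  have degLi: "degree Li \<le> N" unfolding Li_def using LB_deg i by auto
  have degM: "degree M \<le> N" unfolding M_def using LB_deg[of jb] jb by (simp add: degree_pcompose)
  have Mval: "poly M (tau k) = (if j = k then 1 else 0)" if k: "k \<in> {1..N}" for k
  proof -
    have "poly M (tau k) = poly (LB jb) (tau (N + 1 - k))" using pM tau_refl[OF k] by simp
    also have "\<dots> = (if j = k then 1 else 0)" using LB_val[of jb "N + 1 - k"] jb k j unfolding jb_def by auto
    finally show ?thesis .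
  qed
  have Lval: "poly Li (tau k) = (if i = k then 1 else 0)" if k: "k \<in> {1..N}" for k
    unfolding Li_def using LB_val[of i k] i k by auto
  have M1: "poly M 1 = 0" using pM LB_val[of jb 0] jb tau0 by auto
  have Lm1: "poly Li (-1) = 0" unfolding Li_def using LB_val[of i 0] i tau0 by auto
  have d1: "degree (pderiv Li * M) \<le> 2 * N - 1"
    using degree_mult_le[of "pderiv Li" M] degree_pderiv[of Li] degLi degM N1 by arith
  have d2: "degree (Li * pderiv M) \<le> 2 * N - 1"
    using degree_mult_le[of Li "pderiv M"] degree_pderiv[of M] degLi degM N1 by arith
  have I1: "integral {-1..1} (\<lambda>x. poly (pderiv Li * M) x) = w j * colloc_D N tau j i"
  proof -
    have "integral {-1..1} (\<lambda>x. poly (pderiv Li * M) x) = (\<Sum>k\<in>{1..N}. w k * poly (pderiv Li * M) (tau k))"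
      by (rule quad_exact[OF d1])
    also have "\<dots> = (\<Sum>k\<in>{1..N}. (w k * poly (pderiv Li) (tau k)) * (if j = k then 1 else 0))"
      by (rule sum.cong) (simp_all add: Mval)
    also have "\<dots> = w j * poly (pderiv Li) (tau j)" by (rule sum_delta1[OF j])
    finally show ?thesis unfolding Li_def colloc_D_poly .
  qed
  have I2: "integral {-1..1} (\<lambda>x. poly (Li * pderiv M) x) = - (w i * colloc_D N tau ib jb)"
  proof -
    have "integral {-1..1} (\<lambda>x. poly (Li * pderiv M) x) = (\<Sum>k\<in>{1..N}. w k * poly (Li * pderiv M) (tau k))"
      by (rule quad_exact[OF d2])
    also have "\<dots> = (\<Sum>k\<in>{1..N}. (w k * poly (pderiv M) (tau k)) * (if i = k then 1 else 0))"
      by (rule sum.cong) (simp_all add: Lval)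
    also have "\<dots> = w i * poly (pderiv M) (tau i)" by (rule sum_delta1[OF i])
    also have "\<dots> = - (w i * poly (pderiv (LB jb)) (tau ib))"
      using pdM tau_refl[OF i] unfolding ib_def by simp
    finally show ?thesis unfolding colloc_D_poly .
  qed
  have "integral {-1..1} (\<lambda>x. poly (pderiv Li * M) x) + integral {-1..1} (\<lambda>x. poly (Li * pderiv M) x)
      = integral {-1..1} (\<lambda>x. poly (pderiv Li * M) x + poly (Li * pderiv M) x)"
    by (rule integral_add[symmetric]) (rule int_poly)+
  also have "\<dots> = integral {-1..1} (\<lambda>x. poly (pderiv (Li * M)) x)"
    by (simp add: pderiv_mult algebra_simps)
  also have "\<dots> = 0" unfolding ftc_poly using M1 Lm1 by simp
  finally show ?thesis using I1 I2 unfolding ib_def jb_def by simp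
qed

lemma Ddag_refl:
  assumes i: "i \<in> {1..N}" and j: "j \<in> {1..N}"
  shows "Ddag N tau i j = - colloc_D N tau (N + 1 - i) (N + 1 - j)"
proof -
  have "Ddag N tau i j = - (w j * colloc_D N tau j i) / w i" using j unfolding Ddag_def by simp
  also have "\<dots> = - colloc_D N tau (N + 1 - i) (N + 1 - j)" using D_refl[OF i j] w_pos[OF i] by simp
  finally show ?thesis .
qed

lemma Ddag_last: "Ddag N tau i (N + 1) = - (\<Sum>l\<in>{1..N}. Ddag N tau i l)"
  unfolding Ddag_def by simp

end


lemma dot_mv: "(x::real^'r) \<bullet> (A *v y) = (transpose A *v x) \<bullet> (y::real^'c)"
proof -
  have "x \<bullet> (A *v y) = (\<Sum>i\<in>UNIV. \<Sum>j\<in>UNIV. x $ i * A $ i $ j * y $ j)"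
    by (simp add: inner_vec_def matrix_vector_mult_def sum_distrib_left mult.assoc)
  also have "\<dots> = (\<Sum>j\<in>UNIV. \<Sum>i\<in>UNIV. x $ i * A $ i $ j * y $ j)" by (rule sum.swap)
  also have "\<dots> = (transpose A *v x) \<bullet> y"
    by (simp add: inner_vec_def matrix_vector_mult_def transpose_def sum_distrib_left mult.commute mult.left_commute del: transpose_matrix_vector)
  finally show ?thesis .
qed

lemma mat_norm_bound: "norm ((M::real^'c^'r) *v x) \<le> mat_norm M * norm x"
  unfolding mat_norm_def by (rule onorm) simp

lemma mat_norm_nonneg: "0 \<le> mat_norm (M::real^'c^'r)"
  unfolding mat_norm_def by (rule onorm_pos_le) simp

lemma mat_norm_le: "mat_norm (M::real^'c^'r) \<le> b \<Longrightarrow> norm (M *v x) \<le> b * norm x"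
  by (meson mat_norm_bound mult_right_mono norm_ge_zero order_trans)

lemma mat_norm_le_T:
  assumes "mat_norm (M::real^'c^'r) \<le> b"
  shows "norm (transpose M *v x) \<le> b * norm x"
proof -
  let ?y = "transpose M *v x"
  have "norm ?y ^ 2 = ?y \<bullet> ?y" by (simp add: power2_norm_eq_inner)
  also have "\<dots> = x \<bullet> (M *v ?y)" by (simp add: dot_mv del: transpose_matrix_vector)
  also have "\<dots> \<le> norm x * norm (M *v ?y)" by (rule norm_cauchy_schwarz)
  also have "\<dots> \<le> norm x * (b * norm ?y)" by (rule mult_left_mono[OF mat_norm_le[OF assms]]) simp
  finally have h: "norm ?y ^ 2 \<le> norm x * (b * norm ?y)" .
  show ?thesis
  proof (cases "norm ?y = 0")
    case True
    then show ?thesis using assms mat_norm_nonneg[of M] by simp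
  next
    case False
    then have "norm ?y > 0" by simp
    then show ?thesis using h by (simp add: power2_eq_square algebra_simps)
  qed
qed

lemma quad_lin_nonneg:
  fixes a b :: real
  assumes "\<And>t. 0 \<le> b * t + a * t^2" shows "b = 0"
proof (rule ccontr)
  assume b: "b \<noteq> 0"
  define c where "c = \<bar>a\<bar> + 1"
  define t where "t = - b / c"
  have pos: "c > 0" unfolding c_def by simp
  have "0 \<le> b * t + a * t^2" by (rule assms)
  also have "\<dots> = -(b^2) * (c - a) / (c^2)"
    unfolding t_def using pos by (simp add: power2_eq_square field_simps)
  also have "\<dots> < 0"
  proof -
    have "b^2 > 0" using b by simp
    moreover have "c - a > 0" unfolding c_def by linarith
    ultimately show ?thesis using pos by (simp add: divide_neg_pos mult_pos_pos)
  qed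
  finally show False by simp
qed

lemma eig_lower:
  fixes M :: "real^'k^'k"
  assumes sym: "transpose M = M" and eg: "eigs_gt M a"
  shows "a * (x \<bullet> x) \<le> x \<bullet> (M *v x)"
proof -
  define f where "f = (\<lambda>x::real^'k. x \<bullet> (M *v x))"
  have symd: "u \<bullet> (M *v v) = v \<bullet> (M *v u)" for u v
    using dot_mv[of u M v] sym by (simp add: inner_commute del: transpose_matrix_vector)
  have cont: "continuous_on (sphere 0 1) f" unfolding f_def
    by (intro continuous_intros)
  define i :: 'k where "i = undefined"
  have ne: "sphere (0::real^'k) 1 \<noteq> {}" using norm_axis_1[of i] by (auto simp: sphere_def dist_norm intro!: exI[of _ "axis i 1"])
  obtain v where v: "v \<in> sphere 0 1" and vmin: "\<And>y. y \<in> sphere 0 1 \<Longrightarrow> f v \<le> f y"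
    using continuous_attains_inf[OF compact_sphere ne cont] by blast
  have nv: "norm v = 1" using v by simp
  define lam where "lam = f v"
  have fscale: "f (c *\<^sub>R x) = c^2 * f x" for c x unfolding f_def
    by (simp add: matrix_vector_mult_scaleR power2_eq_square)
  have hmin: "lam * (x \<bullet> x) \<le> f x" for x
  proof (cases "x = 0")
    case True then show ?thesis by (simp add: f_def)
  next
    case False
    then have nx: "norm x > 0" by simp
    have "(inverse (norm x) *\<^sub>R x) \<in> sphere 0 1" using nx by simp
    then have "lam \<le> f (inverse (norm x) *\<^sub>R x)" unfolding lam_def by (rule vmin)
    also have "\<dots> = f x / (norm x)^2" unfolding fscale by (simp add: field_simps power2_eq_square)
    finally have "lam * (norm x)^2 \<le> f x" using nx by (simp add: field_simps)
    then show ?thesis by (simp add: power2_norm_eq_inner)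
  qed
  define g where "g = M *v v - lam *\<^sub>R v"
  have vv: "v \<bullet> v = 1" using nv by (simp add: power2_norm_eq_inner[symmetric])
  have "g \<bullet> g = 0"
  proof -
    have "0 \<le> (2 * (g \<bullet> g)) * t + (f g - lam * (g \<bullet> g)) * t^2" for t
    proof -
      have h: "lam * ((v + t *\<^sub>R g) \<bullet> (v + t *\<^sub>R g)) \<le> f (v + t *\<^sub>R g)" by (rule hmin)
      have e1: "f (v + t *\<^sub>R g) = lam + 2 * t * (g \<bullet> (M *v v)) + t^2 * f g"
        unfolding f_def lam_def using symd[of v g]
        by (simp add: matrix_vector_right_distrib matrix_vector_mult_scaleR inner_add_left inner_add_right power2_eq_square algebra_simps)
      have e2: "(v + t *\<^sub>R g) \<bullet> (v + t *\<^sub>R g) = 1 + 2 * t * (g \<bullet> v) + t^2 * (g \<bullet> g)"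
        using vv by (simp add: inner_add_left inner_add_right inner_commute[of v g] power2_eq_square algebra_simps)
      have e3: "g \<bullet> (M *v v) = g \<bullet> g + lam * (g \<bullet> v)"
        unfolding g_def by (simp add: inner_diff_right algebra_simps)
      have A: "lam * (1 + 2 * t * (g \<bullet> v) + t^2 * (g \<bullet> g)) \<le> lam + 2 * t * (g \<bullet> g + lam * (g \<bullet> v)) + t^2 * f g"
        using h unfolding e1 e2 e3 .
      then show ?thesis by (simp add: algebra_simps)
    qed
    then have "2 * (g \<bullet> g) = 0" by (rule quad_lin_nonneg)
    then show ?thesis by simp
  qed
  then have "M *v v = lam *\<^sub>R v" unfolding g_def by simp
  moreover have "v \<noteq> 0" using nv by auto
  ultimately have "a < lam" using eg unfolding eigs_gt_def by blast
  moreover have "0 \<le> x \<bullet> x" by simp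
  ultimately have "a * (x \<bullet> x) \<le> lam * (x \<bullet> x)" by (simp add: mult_right_mono)
  also have "\<dots> \<le> f x" by (rule hmin)
  finally show ?thesis unfolding f_def .
qed

lemma norm2_vec: "(norm (x::real^'a))^2 = (\<Sum>i\<in>UNIV. (x $ i)^2)"
  unfolding power2_norm_eq_inner inner_vec_def by (simp add: power2_eq_square)

lemma schur:
  fixes M :: "real^'a^'b"
  assumes r: "\<And>i. (\<Sum>j\<in>UNIV. \<bar>M $ i $ j\<bar>) \<le> r" and c: "\<And>j. (\<Sum>i\<in>UNIV. \<bar>M $ i $ j\<bar>) \<le> c"
  shows "(norm (M *v x))^2 \<le> r * c * (norm x)^2"
proof -
  have r0: "0 \<le> r" using r[of undefined] by (meson order_trans sum_nonneg abs_ge_zero)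
  have row: "((M *v x) $ i)^2 \<le> r * (\<Sum>j\<in>UNIV. \<bar>M $ i $ j\<bar> * (x $ j)^2)" for i
  proof -
    have "\<bar>(M *v x) $ i\<bar> \<le> (\<Sum>j\<in>UNIV. \<bar>M $ i $ j\<bar> * \<bar>x $ j\<bar>)"
      unfolding matrix_vector_mult_def by (simp add: abs_mult[symmetric] sum_abs)
    then have "((M *v x) $ i)^2 \<le> (\<Sum>j\<in>UNIV. \<bar>M $ i $ j\<bar> * \<bar>x $ j\<bar>)^2"
      by (metis abs_ge_zero power2_abs power_mono)
    also have "\<dots> = (\<Sum>j\<in>UNIV. sqrt \<bar>M $ i $ j\<bar> * (sqrt \<bar>M $ i $ j\<bar> * \<bar>x $ j\<bar>))^2"
      by (simp add: mult.assoc[symmetric])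
    also have "\<dots> \<le> (\<Sum>j\<in>UNIV. (sqrt \<bar>M $ i $ j\<bar>)^2) * (\<Sum>j\<in>UNIV. (sqrt \<bar>M $ i $ j\<bar> * \<bar>x $ j\<bar>)^2)"
      by (rule Cauchy_Schwarz_ineq_sum)
    also have "\<dots> = (\<Sum>j\<in>UNIV. \<bar>M $ i $ j\<bar>) * (\<Sum>j\<in>UNIV. \<bar>M $ i $ j\<bar> * (x $ j)^2)"
      by (simp add: power_mult_distrib)
    also have "\<dots> \<le> r * (\<Sum>j\<in>UNIV. \<bar>M $ i $ j\<bar> * (x $ j)^2)"
      by (rule mult_right_mono[OF r]) (simp add: sum_nonneg)
    finally show ?thesis .
  qed
  have "(norm (M *v x))^2 = (\<Sum>i\<in>UNIV. ((M *v x) $ i)^2)" by (rule norm2_vec)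
  also have "\<dots> \<le> (\<Sum>i\<in>UNIV. r * (\<Sum>j\<in>UNIV. \<bar>M $ i $ j\<bar> * (x $ j)^2))" by (rule sum_mono) (rule row)
  also have "\<dots> = r * (\<Sum>i\<in>UNIV. \<Sum>j\<in>UNIV. \<bar>M $ i $ j\<bar> * (x $ j)^2)"
    by (simp add: sum_distrib_left)
  also have "\<dots> = r * (\<Sum>j\<in>UNIV. \<Sum>i\<in>UNIV. \<bar>M $ i $ j\<bar> * (x $ j)^2)"
    by (subst sum.swap) (rule refl)
  also have "\<dots> = r * (\<Sum>j\<in>UNIV. (x $ j)^2 * (\<Sum>i\<in>UNIV. \<bar>M $ i $ j\<bar>))"
    by (simp add: sum_distrib_left mult.commute)
  also have "\<dots> \<le> r * (\<Sum>j\<in>UNIV. (x $ j)^2 * c)"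
    by (intro mult_left_mono[OF _ r0] sum_mono mult_left_mono[OF c]) simp
  also have "\<dots> = r * c * (norm x)^2" unfolding norm2_vec by (simp add: sum_distrib_left mult.commute mult.left_commute mult.assoc)
  finally show ?thesis .
qed

lemma inf_norm_row: "(\<Sum>j\<in>UNIV. \<bar>M $ i $ j\<bar>) \<le> mat_inf_norm (M::real^'c^'r)"
  unfolding mat_inf_norm_def by (rule Max_ge) auto

lemma schur_T:
  fixes A :: "real^'n^'n"
  assumes "mat_inf_norm A \<le> 1/4" "mat_inf_norm (transpose A) \<le> 1/4"
  shows "norm (transpose A *v x) \<le> 1/4 * norm x"
proof -
  have r: "(\<Sum>j\<in>UNIV. \<bar>transpose A $ i $ j\<bar>) \<le> 1/4" for i
    using inf_norm_row[of "transpose A" i] assms(2) by linarith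
  have c: "(\<Sum>i\<in>UNIV. \<bar>transpose A $ i $ j\<bar>) \<le> 1/4" for j
    using inf_norm_row[of A j] assms(1) by (simp add: transpose_def)
  have "(norm (transpose A *v x))^2 \<le> (1/4 * norm x)^2"
    using schur[OF r c, of x] by (simp add: power2_eq_square)
  then show ?thesis by (rule power2_le_imp_le) simp
qed

lemma sum_UNIV_plus: "(\<Sum>a\<in>(UNIV::('a::finite + 'b::finite) set). g a) = (\<Sum>p\<in>UNIV. g (Inl p)) + (\<Sum>q\<in>UNIV. g (Inr q))"
proof -
  have "(\<Sum>a\<in>(UNIV::('a + 'b) set). g a) = (\<Sum>a\<in>(UNIV::'a set) <+> (UNIV::'b set). g a)" by simp
  also have "\<dots> = (\<Sum>p\<in>UNIV. g (Inl p)) + (\<Sum>q\<in>UNIV. g (Inr q))"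
    by (subst sum.Plus) (auto simp: o_def)
  finally show ?thesis .
qed

definition zv :: "real^'n \<Rightarrow> real^'m \<Rightarrow> real^('n + 'm)" where
  "zv X U = (\<chi> a. case a of Inl p \<Rightarrow> X $ p | Inr q \<Rightarrow> U $ q)"

lemma zv_Inl[simp]: "zv X U $ Inl p = X $ p" unfolding zv_def by simp
lemma zv_Inr[simp]: "zv X U $ Inr q = U $ q" unfolding zv_def by simp

lemma zv_norm: "zv X U \<bullet> zv X U = X \<bullet> X + U \<bullet> U"
  unfolding inner_vec_def zv_def by (simp add: sum_UNIV_plus)

lemma zv_quad: "zv X U \<bullet> (block_QSR Q S R *v zv X U) = X \<bullet> (Q *v X) + 2 * (X \<bullet> (S *v U)) + U \<bullet> (R *v U)"
proof -
  have a: "(block_QSR Q S R *v zv X U) $ Inl p = (Q *v X) $ p + (S *v U) $ p" for p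
    unfolding matrix_vector_mult_def block_QSR_def zv_def by (simp add: sum_UNIV_plus)
  have b: "(block_QSR Q S R *v zv X U) $ Inr q = (transpose S *v X) $ q + (R *v U) $ q" for q
    unfolding matrix_vector_mult_def block_QSR_def zv_def transpose_def by (simp add: sum_UNIV_plus del: transpose_matrix_vector)
  have "zv X U \<bullet> (block_QSR Q S R *v zv X U) = X \<bullet> (Q *v X + S *v U) + U \<bullet> (transpose S *v X + R *v U)"
    unfolding inner_vec_def by (simp only: sum_UNIV_plus a b zv_Inl zv_Inr vector_add_component inner_real_def)
  also have "\<dots> = X \<bullet> (Q *v X) + 2 * (X \<bullet> (S *v U)) + U \<bullet> (R *v U)"
    using dot_mv[of U "transpose S" X] by (simp add: inner_add_right inner_commute del: transpose_matrix_vector)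
  finally show ?thesis .
qed

lemma block_lower:
  assumes "transpose Q = Q" "transpose R = R" "eigs_gt (block_QSR Q S R) a"
  shows "a * (X \<bullet> X + U \<bullet> U) \<le> X \<bullet> (Q *v X) + 2 * (X \<bullet> (S *v U)) + U \<bullet> (R *v U)"
proof -
  have sym: "transpose (block_QSR Q S R) = block_QSR Q S R"
  proof -
    have "transpose (block_QSR Q S R) $ a $ b = block_QSR Q S R $ a $ b" for a b
    proof (cases a; cases b)
      fix p q assume "a = Inl p" "b = Inl q"
      then show ?thesis using arg_cong[OF assms(1), of "\<lambda>M. M $ p $ q"]
        by (simp add: block_QSR_def transpose_def del: transpose_matrix_vector)
    next
      fix p q assume "a = Inr p" "b = Inr q"
      then show ?thesis using arg_cong[OF assms(2), of "\<lambda>M. M $ p $ q"]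
        by (simp add: block_QSR_def transpose_def del: transpose_matrix_vector)
    qed (simp_all add: block_QSR_def transpose_def del: transpose_matrix_vector)
    then show ?thesis by (simp add: vec_eq_iff)
  qed
  show ?thesis using eig_lower[OF sym assms(3), of "zv X U"] by (simp add: zv_norm zv_quad)
qed


lemma inv_bound:
  fixes v u :: "nat \<Rightarrow> 'a::real_normed_vector"
  assumes inv: "is_inverse_N N M F"
    and rows: "\<forall>i\<in>{1..N}. sqrt (\<Sum>j\<in>{1..N}. (F i j)\<^sup>2) \<le> sqrt 2"
    and eq: "\<And>i. i \<in> {1..N} \<Longrightarrow> (\<Sum>j\<in>{1..N}. M i j *\<^sub>R v j) = u i"
    and i: "i \<in> {1..N}"
  shows "norm (v i) \<le> sqrt 2 * L2_set (\<lambda>j. norm (u j)) {1..N}"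
proof -
  have "(\<Sum>k\<in>{1..N}. F i k *\<^sub>R u k) = (\<Sum>k\<in>{1..N}. \<Sum>j\<in>{1..N}. (F i k * M k j) *\<^sub>R v j)"
    by (rule sum.cong) (simp_all add: eq[symmetric] scaleR_sum_right)
  also have "\<dots> = (\<Sum>j\<in>{1..N}. \<Sum>k\<in>{1..N}. (F i k * M k j) *\<^sub>R v j)" by (rule sum.swap)
  also have "\<dots> = (\<Sum>j\<in>{1..N}. (if i = j then 1 else 0) *\<^sub>R v j)"
  proof (rule sum.cong)
    fix j assume j: "j \<in> {1..N}"
    have "(\<Sum>k\<in>{1..N}. (F i k * M k j) *\<^sub>R v j) = (\<Sum>k\<in>{1..N}. F i k * M k j) *\<^sub>R v j"
      by (simp add: scaleR_sum_left)
    also have "\<dots> = (if i = j then 1 else 0) *\<^sub>R v j" using inv i j unfolding is_inverse_N_def by simp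
    finally show "(\<Sum>k\<in>{1..N}. (F i k * M k j) *\<^sub>R v j) = (if i = j then 1 else 0) *\<^sub>R v j" .
  qed simp
  also have "\<dots> = (\<Sum>j\<in>{1..N}. if j = i then v j else 0)" by (rule sum.cong) auto
  also have "\<dots> = v i" using i by simp
  finally have vi: "v i = (\<Sum>k\<in>{1..N}. F i k *\<^sub>R u k)" by simp
  have "norm (v i) \<le> (\<Sum>k\<in>{1..N}. \<bar>F i k\<bar> * \<bar>norm (u k)\<bar>)"
    unfolding vi by (rule order_trans[OF norm_sum]) simp
  also have "\<dots> \<le> L2_set (F i) {1..N} * L2_set (\<lambda>j. norm (u j)) {1..N}" by (rule L2_set_mult_ineq)
  also have "\<dots> \<le> sqrt 2 * L2_set (\<lambda>j. norm (u j)) {1..N}"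
    using rows i unfolding L2_set_def by (intro mult_right_mono) (auto simp: sum_nonneg)
  finally show ?thesis .
qed

definition Kc :: "real \<Rightarrow> real \<Rightarrow> real" where "Kc a b = 3 * (2 + 15 * b) / a + sqrt (90 / a)"
definition CXc :: "real \<Rightarrow> real \<Rightarrow> real" where "CXc a b = 2 + 2 * b * Kc a b + Kc a b"
definition CLc :: "real \<Rightarrow> real \<Rightarrow> real" where "CLc a b = 6 + 3 * b * Kc a b"
definition CUc :: "real \<Rightarrow> real \<Rightarrow> real" where "CUc a b = (1 + b * CXc a b + b * CLc a b) / a"

context gauss
begin

definition wl :: "(nat \<Rightarrow> real) \<Rightarrow> real" where
  "wl f = L2_set (\<lambda>i. sqrt (w i) * f i) {1..N}"

lemma wl_nonneg: "0 \<le> wl f" unfolding wl_def by simp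

lemma wl_mono: "(\<And>i. i \<in> {1..N} \<Longrightarrow> 0 \<le> f i \<and> f i \<le> g i) \<Longrightarrow> wl f \<le> wl g"
  unfolding wl_def by (rule L2_set_mono) (auto intro!: mult_left_mono simp: w_pos less_imp_le)

lemma wl_add: "wl (\<lambda>i. f i + g i) \<le> wl f + wl g"
  unfolding wl_def by (simp add: distrib_left L2_set_triangle_ineq)

lemma wl_scale: "0 \<le> c \<Longrightarrow> wl (\<lambda>i. c * f i) = c * wl f"
  unfolding wl_def by (simp add: L2_set_right_distrib mult.left_commute)

lemma wl_sq: "(wl f)^2 = (\<Sum>i\<in>{1..N}. w i * (f i)^2)"
proof -
  have "(wl f)^2 = (\<Sum>i\<in>{1..N}. (sqrt (w i) * f i)^2)"
    unfolding wl_def L2_set_def by (simp add: sum_nonneg)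
  also have "\<dots> = (\<Sum>i\<in>{1..N}. w i * (f i)^2)"
    by (rule sum.cong) (auto simp: power_mult_distrib w_pos less_imp_le)
  finally show ?thesis .
qed

lemma wl_const_le: "(\<And>i. i \<in> {1..N} \<Longrightarrow> 0 \<le> f i \<and> f i \<le> c) \<Longrightarrow> wl f \<le> sqrt 2 * c"
proof -
  assume h: "\<And>i. i \<in> {1..N} \<Longrightarrow> 0 \<le> f i \<and> f i \<le> c"
  have c0: "0 \<le> c" using h[of 1] N1 by auto
  have "wl f \<le> wl (\<lambda>i. c)" by (rule wl_mono) (use h in auto)
  also have "(wl (\<lambda>i. c))^2 = 2 * c^2" unfolding wl_sq using w_sum by (simp add: sum_distrib_right[symmetric])
  then have "wl (\<lambda>i. c) = sqrt 2 * c" using c0 wl_nonneg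
    by (metis real_sqrt_abs real_sqrt_mult abs_of_nonneg real_sqrt_pow2_iff)
  finally show ?thesis .
qed

lemma wl_sum_le: "(\<Sum>i\<in>{1..N}. w i * \<bar>f i\<bar>) \<le> sqrt 2 * wl f"
proof -
  have "(\<Sum>i\<in>{1..N}. w i * \<bar>f i\<bar>) = (\<Sum>i\<in>{1..N}. \<bar>sqrt (w i)\<bar> * \<bar>sqrt (w i) * f i\<bar>)"
    by (rule sum.cong) (auto simp: abs_mult w_pos less_imp_le real_sqrt_mult[symmetric] mult.assoc[symmetric])
  also have "\<dots> \<le> L2_set (\<lambda>i. sqrt (w i)) {1..N} * wl f" unfolding wl_def by (rule L2_set_mult_ineq)
  also have "L2_set (\<lambda>i. sqrt (w i)) {1..N} = sqrt 2"
    unfolding L2_set_def using w_sum by (simp add: w_pos less_imp_le)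
  finally show ?thesis .
qed

lemma wDdag: "i \<in> {1..N} \<Longrightarrow> j \<in> {1..N} \<Longrightarrow> w i * Ddag N tau i j = - (w j * colloc_D N tau j i)"
  unfolding Ddag_def using w_pos[of i] by auto

lemma wDdag_last: "i \<in> {1..N} \<Longrightarrow> w i * Ddag N tau i (N+1) = (\<Sum>l\<in>{1..N}. w l * colloc_D N tau l i)"
  unfolding Ddag_def using w_pos[of i] by (auto simp: sum_distrib_left sum_negf)

lemma adj_id:
  fixes X L :: "nat \<Rightarrow> 'a::real_inner"
  shows "(\<Sum>i\<in>{1..N}. w i * (X i \<bullet> (\<Sum>j\<in>{1..N+1}. Ddag N tau i j *\<^sub>R L j)))
       + (\<Sum>i\<in>{1..N}. w i * (L i \<bullet> (\<Sum>j\<in>{1..N}. colloc_D N tau i j *\<^sub>R X j)))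
       = L (N+1) \<bullet> (\<Sum>i\<in>{1..N}. w i *\<^sub>R (\<Sum>j\<in>{1..N}. colloc_D N tau i j *\<^sub>R X j))"
proof -
  let ?D = "colloc_D N tau"
  have s1: "(\<Sum>i\<in>{1..N}. w i * (X i \<bullet> (\<Sum>j\<in>{1..N+1}. Ddag N tau i j *\<^sub>R L j)))
     = (\<Sum>i\<in>{1..N}. (\<Sum>j\<in>{1..N}. - (w j * ?D j i) * (X i \<bullet> L j)) + (\<Sum>l\<in>{1..N}. w l * ?D l i) * (X i \<bullet> L (N+1)))"
  proof (rule sum.cong)
    fix i assume i: "i \<in> {1..N}"
    have "w i * (X i \<bullet> (\<Sum>j\<in>{1..N+1}. Ddag N tau i j *\<^sub>R L j)) = (\<Sum>j\<in>{1..N+1}. (w i * Ddag N tau i j) * (X i \<bullet> L j))"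
      by (simp only: inner_sum_right inner_scaleR_right sum_distrib_left mult.assoc)
    also have "\<dots> = (\<Sum>j\<in>{1..N}. (w i * Ddag N tau i j) * (X i \<bullet> L j)) + (w i * Ddag N tau i (N+1)) * (X i \<bullet> L (N+1))"
      by (simp add: inner_add_right inner_sum_right sum_distrib_left distrib_left mult.assoc)
    also have "\<dots> = (\<Sum>j\<in>{1..N}. - (w j * ?D j i) * (X i \<bullet> L j)) + (\<Sum>l\<in>{1..N}. w l * ?D l i) * (X i \<bullet> L (N+1))"
      using i wDdag_last[OF i] by (simp add: wDdag)
    finally show "w i * (X i \<bullet> (\<Sum>j\<in>{1..N+1}. Ddag N tau i j *\<^sub>R L j)) = (\<Sum>j\<in>{1..N}. - (w j * ?D j i) * (X i \<bullet> L j)) + (\<Sum>l\<in>{1..N}. w l * ?D l i) * (X i \<bullet> L (N+1))" .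
  qed simp
  have s2: "(\<Sum>i\<in>{1..N}. w i * (L i \<bullet> (\<Sum>j\<in>{1..N}. ?D i j *\<^sub>R X j))) = (\<Sum>i\<in>{1..N}. \<Sum>j\<in>{1..N}. (w j * ?D j i) * (X i \<bullet> L j))"
  proof -
    have "(\<Sum>i\<in>{1..N}. w i * (L i \<bullet> (\<Sum>j\<in>{1..N}. ?D i j *\<^sub>R X j))) = (\<Sum>j\<in>{1..N}. \<Sum>i\<in>{1..N}. (w j * ?D j i) * (X i \<bullet> L j))"
      by (simp add: inner_sum_right sum_distrib_left inner_commute mult.assoc)
    also have "\<dots> = (\<Sum>i\<in>{1..N}. \<Sum>j\<in>{1..N}. (w j * ?D j i) * (X i \<bullet> L j))" by (rule sum.swap)
    finally show ?thesis .
  qed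
  have s3: "L (N+1) \<bullet> (\<Sum>i\<in>{1..N}. w i *\<^sub>R (\<Sum>j\<in>{1..N}. ?D i j *\<^sub>R X j)) = (\<Sum>i\<in>{1..N}. (\<Sum>l\<in>{1..N}. w l * ?D l i) * (X i \<bullet> L (N+1)))"
  proof -
    have "L (N+1) \<bullet> (\<Sum>i\<in>{1..N}. w i *\<^sub>R (\<Sum>j\<in>{1..N}. ?D i j *\<^sub>R X j)) = (\<Sum>l\<in>{1..N}. \<Sum>i\<in>{1..N}. (w l * ?D l i) * (X i \<bullet> L (N+1)))"
      by (simp add: inner_sum_right sum_distrib_left inner_commute mult.assoc)
    also have "\<dots> = (\<Sum>i\<in>{1..N}. \<Sum>l\<in>{1..N}. (w l * ?D l i) * (X i \<bullet> L (N+1)))" by (rule sum.swap)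
    also have "\<dots> = (\<Sum>i\<in>{1..N}. (\<Sum>l\<in>{1..N}. w l * ?D l i) * (X i \<bullet> L (N+1)))" by (simp add: sum_distrib_right)
    finally show ?thesis .
  qed
  show ?thesis unfolding s1 s2 s3 by (simp add: sum.distrib sum_negf sum_subtractf)
qed

end

locale sys = gauss +
  fixes A :: "nat \<Rightarrow> real^'n^'n" and B :: "nat \<Rightarrow> real^'m^'n" and Q :: "nat \<Rightarrow> real^'n^'n"
    and S :: "nat \<Rightarrow> real^'m^'n" and R :: "nat \<Rightarrow> real^'m^'m" and T :: "real^'n^'n"
    and X :: "nat \<Rightarrow> real^'n" and U :: "nat \<Rightarrow> real^'m" and L :: "nat \<Rightarrow> real^'n"
    and alpha beta :: real
  assumes alpha: "alpha > 0" and beta: "beta \<ge> 0"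
    and symT: "transpose T = T"
    and symQR: "\<forall>i\<in>{1..N}. transpose (Q i) = Q i \<and> transpose (R i) = R i"
    and eigT: "eigs_gt T alpha"
    and eigB: "\<forall>i\<in>{1..N}. eigs_gt (block_QSR (Q i) (S i) (R i)) alpha"
    and Ainf: "\<forall>i\<in>{1..N}. mat_inf_norm (A i) \<le> 1/4 \<and> mat_inf_norm (transpose (A i)) \<le> 1/4"
    and norms: "\<forall>i\<in>{1..N}. mat_norm (A i) \<le> beta \<and> mat_norm (B i) \<le> beta \<and> mat_norm (Q i) \<le> beta \<and>
                 mat_norm (S i) \<le> beta \<and> mat_norm (R i) \<le> beta"
    and normT: "mat_norm T \<le> beta"
    and P2: "\<exists>F. is_inverse_N N (\<lambda>i j. sqrt (gauss_weight N tau i) * colloc_D N tau i j) F \<and>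
         (\<forall>i\<in>{1..N}. sqrt (\<Sum>j\<in>{1..N}. (F i j)\<^sup>2) \<le> sqrt 2)"
begin

definition "DX i = (\<Sum>j\<in>{1..N}. colloc_D N tau i j *\<^sub>R X j)"
definition "y1 i = DX i - A i *v X i - B i *v U i"
definition "y2 = X (N+1) - (\<Sum>j\<in>{1..N}. w j *\<^sub>R (A j *v X j + B j *v U j))"
definition "y3 i = (\<Sum>j\<in>{1..N+1}. Ddag N tau i j *\<^sub>R L j) + transpose (A i) *v L i + Q i *v X i + S i *v U i"
definition "y4 = L (N+1) - T *v X (N+1)"
definition "y5 i = transpose (S i) *v X i + R i *v U i + transpose (B i) *v L i"
definition "Y = y_norm N (y1, y2, y3, y4, y5)"

lemma grad_eq: "gradT_star N tau A B Q S R T X U L = (y1, y2, y3, y4, y5)"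
  unfolding gradT_star_def y1_def y2_def y3_def y4_def y5_def DX_def by simp

lemma Y_ge:
  shows "\<And>i. i \<in> {1..N} \<Longrightarrow> norm (y1 i) \<le> Y" "norm y2 \<le> Y"
    "\<And>i. i \<in> {1..N} \<Longrightarrow> norm (y3 i) \<le> Y" "norm y4 \<le> Y" "\<And>i. i \<in> {1..N} \<Longrightarrow> norm (y5 i) \<le> Y"
  unfolding Y_def y_norm_def prod.case by (rule Max_ge; force)+

lemma Y_nonneg: "0 \<le> Y" using Y_ge(2) norm_ge_zero order_trans by blast

lemma nA: "i \<in> {1..N} \<Longrightarrow> norm (A i *v x) \<le> beta * norm x" using norms mat_norm_le by blast
lemma nB: "i \<in> {1..N} \<Longrightarrow> norm (B i *v u) \<le> beta * norm u" using norms mat_norm_le by blast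
lemma nQ: "i \<in> {1..N} \<Longrightarrow> norm (Q i *v x) \<le> beta * norm x" using norms mat_norm_le by blast
lemma nS: "i \<in> {1..N} \<Longrightarrow> norm (S i *v u) \<le> beta * norm u" using norms mat_norm_le by blast
lemma nR: "i \<in> {1..N} \<Longrightarrow> norm (R i *v u) \<le> beta * norm u" using norms mat_norm_le by blast
lemma nT: "norm (T *v x) \<le> beta * norm x" using normT mat_norm_le by blast
lemma nST: "i \<in> {1..N} \<Longrightarrow> norm (transpose (S i) *v x) \<le> beta * norm x" using norms mat_norm_le_T by blast
lemma nBT: "i \<in> {1..N} \<Longrightarrow> norm (transpose (B i) *v x) \<le> beta * norm x" using norms mat_norm_le_T by blast
lemma nAT: "i \<in> {1..N} \<Longrightarrow> norm (transpose (A i) *v x) \<le> 1/4 * norm x" using Ainf schur_T by blast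

definition "Lp i = L i - L (N+1)"
definition "r i = y3 i - transpose (A i) *v L i - Q i *v X i - S i *v U i"

lemma costate: "i \<in> {1..N} \<Longrightarrow> (\<Sum>j\<in>{1..N}. Ddag N tau i j *\<^sub>R Lp j) = r i"
proof -
  assume i: "i \<in> {1..N}"
  have "(\<Sum>j\<in>{1..N+1}. Ddag N tau i j *\<^sub>R L j) = (\<Sum>j\<in>{1..N}. Ddag N tau i j *\<^sub>R L j) + Ddag N tau i (N+1) *\<^sub>R L (N+1)"
    by simp
  also have "\<dots> = (\<Sum>j\<in>{1..N}. Ddag N tau i j *\<^sub>R L j) - (\<Sum>j\<in>{1..N}. Ddag N tau i j *\<^sub>R L (N+1))"
    by (simp only: Ddag_last scaleR_sum_left scaleR_minus_left) simp
  also have "\<dots> = (\<Sum>j\<in>{1..N}. Ddag N tau i j *\<^sub>R Lp j)"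
    by (simp add: Lp_def scaleR_diff_right sum_subtractf)
  finally show ?thesis unfolding r_def y3_def by simp
qed

lemma sum_rev: "(\<Sum>j\<in>{1..N}. g j) = (\<Sum>j\<in>{1..N}. g (N + 1 - j))"
  using sum.atLeastAtMost_rev[of g 1 N] by simp

lemma wl_refl: "wl (\<lambda>i. f (N + 1 - i)) = wl f"
proof -
  have "(\<Sum>i\<in>{1..N}. (sqrt (w i) * f (N + 1 - i))^2) = (\<Sum>i\<in>{1..N}. (sqrt (w (N + 1 - i)) * f (N + 1 - i))^2)"
  proof (rule sum.cong)
    fix i assume i: "i \<in> {1..N}"
    show "(sqrt (w i) * f (N + 1 - i))^2 = (sqrt (w (N + 1 - i)) * f (N + 1 - i))^2" using w_sym[OF i] by simp
  qed simp
  also have "\<dots> = (\<Sum>i\<in>{1..N}. (sqrt (w i) * f i)^2)" by (rule sum_rev[symmetric])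
  finally show ?thesis unfolding wl_def L2_set_def by simp
qed

lemma Lp_bound: "k \<in> {1..N} \<Longrightarrow> norm (Lp k) \<le> sqrt 2 * wl (\<lambda>i. norm (r i))"
proof -
  assume k: "k \<in> {1..N}"
  obtain F where inv: "is_inverse_N N (\<lambda>i j. sqrt (w i) * colloc_D N tau i j) F"
    and rows: "\<forall>i\<in>{1..N}. sqrt (\<Sum>j\<in>{1..N}. (F i j)\<^sup>2) \<le> sqrt 2" using P2 by blast
  define v where "v j = Lp (N + 1 - j)" for j
  define u where "u i = - (sqrt (w i) *\<^sub>R r (N + 1 - i))" for i
  have eq: "(\<Sum>j\<in>{1..N}. (sqrt (w i) * colloc_D N tau i j) *\<^sub>R v j) = u i" if i: "i \<in> {1..N}" for i
  proof -
    have ib: "N + 1 - i \<in> {1..N}" using i by auto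
    have "(\<Sum>j\<in>{1..N}. colloc_D N tau i j *\<^sub>R v j) = (\<Sum>j\<in>{1..N}. colloc_D N tau i (N + 1 - j) *\<^sub>R v (N + 1 - j))"
      by (rule sum_rev)
    also have "\<dots> = (\<Sum>j\<in>{1..N}. - (Ddag N tau (N + 1 - i) j *\<^sub>R Lp j))"
    proof (rule sum.cong)
      fix j assume j: "j \<in> {1..N}"
      have "Ddag N tau (N + 1 - i) j = - colloc_D N tau i (N + 1 - j)"
        using Ddag_refl[OF ib j] i by simp
      moreover have "v (N + 1 - j) = Lp j" unfolding v_def using j by simp
      ultimately show "colloc_D N tau i (N + 1 - j) *\<^sub>R v (N + 1 - j) = - (Ddag N tau (N + 1 - i) j *\<^sub>R Lp j)" by simp
    qed simp
    also have "\<dots> = - r (N + 1 - i)" using costate[OF ib] by (simp add: sum_negf)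
    finally have e: "(\<Sum>j\<in>{1..N}. colloc_D N tau i j *\<^sub>R v j) = - r (N + 1 - i)" .
    have "(\<Sum>j\<in>{1..N}. (sqrt (w i) * colloc_D N tau i j) *\<^sub>R v j) = sqrt (w i) *\<^sub>R (\<Sum>j\<in>{1..N}. colloc_D N tau i j *\<^sub>R v j)"
      by (simp add: scaleR_sum_right)
    then show ?thesis unfolding u_def e by simp
  qed
  have kb: "N + 1 - k \<in> {1..N}" using k by auto
  have "norm (v (N + 1 - k)) \<le> sqrt 2 * L2_set (\<lambda>j. norm (u j)) {1..N}"
    by (rule inv_bound[OF inv rows eq kb])
  also have "L2_set (\<lambda>j. norm (u j)) {1..N} = wl (\<lambda>j. norm (r (N + 1 - j)))"
    unfolding wl_def u_def by (rule L2_set_cong) (auto simp: w_pos less_imp_le)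
  also have "\<dots> = wl (\<lambda>i. norm (r i))" by (rule wl_refl)
  finally show ?thesis unfolding v_def using k by simp
qed

definition "xa = wl (\<lambda>i. norm (X i))"
definition "ua = wl (\<lambda>i. norm (U i))"
definition "xe = norm (X (N+1))"

lemma xa_nn: "0 \<le> xa" and ua_nn: "0 \<le> ua" and xe_nn: "0 \<le> xe"
  unfolding xa_def ua_def xe_def by (simp_all add: wl_nonneg)

lemma LN_bound: "norm (L (N+1)) \<le> Y + beta * xe"
proof -
  have "L (N+1) = y4 + T *v X (N+1)" unfolding y4_def by simp
  then have "norm (L (N+1)) \<le> norm y4 + norm (T *v X (N+1))" using norm_triangle_ineq by metis
  then show ?thesis using Y_ge(4) nT[of "X (N+1)"] unfolding xe_def by linarith
qed

lemma r_bound: "i \<in> {1..N} \<Longrightarrow> norm (r i) \<le> Y + 1/4 * norm (Lp i) + 1/4 * norm (L (N+1)) + beta * norm (X i) + beta * norm (U i)"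
proof -
  assume i: "i \<in> {1..N}"
  have e: "transpose (A i) *v Lp i + transpose (A i) *v L (N+1) = transpose (A i) *v L i"
    by (simp only: Lp_def matrix_vector_right_distrib[symmetric] diff_add_cancel)
  have re: "r i = y3 i - (transpose (A i) *v Lp i + transpose (A i) *v L (N+1)) - Q i *v X i - S i *v U i"
    by (simp only: r_def e)
  then have "norm (r i) \<le> norm (y3 i) + norm (transpose (A i) *v Lp i) + norm (transpose (A i) *v L (N+1)) + norm (Q i *v X i) + norm (S i *v U i)"
  proof -
    have t: "norm (a - b) \<le> norm a + norm b" for a b :: "real^'n" by (rule norm_triangle_ineq4)
    have t2: "norm (a + b) \<le> norm a + norm b" for a b :: "real^'n" by (rule norm_triangle_ineq)
    show ?thesis unfolding re using t[of "y3 i - (transpose (A i) *v Lp i + transpose (A i) *v L (N+1)) - Q i *v X i" "S i *v U i"]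
      t[of "y3 i - (transpose (A i) *v Lp i + transpose (A i) *v L (N+1))" "Q i *v X i"]
      t[of "y3 i" "transpose (A i) *v Lp i + transpose (A i) *v L (N+1)"]
      t2[of "transpose (A i) *v Lp i" "transpose (A i) *v L (N+1)"] by linarith
  qed
  then show ?thesis using Y_ge(3)[OF i] nAT[OF i, of "Lp i"] nAT[OF i, of "L (N+1)"] nQ[OF i, of "X i"] nS[OF i, of "U i"]
    by linarith
qed

lemma wl_add5: "wl (\<lambda>i. f1 i + f2 i + f3 i + f4 i + f5 i) \<le> wl f1 + wl f2 + wl f3 + wl f4 + wl f5"
proof -
  have a: "wl (\<lambda>i. f1 i + f2 i + f3 i + f4 i + f5 i) \<le> wl (\<lambda>i. f1 i + f2 i + f3 i + f4 i) + wl f5" by (rule wl_add)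
  have b: "wl (\<lambda>i. f1 i + f2 i + f3 i + f4 i) \<le> wl (\<lambda>i. f1 i + f2 i + f3 i) + wl f4" by (rule wl_add)
  have c: "wl (\<lambda>i. f1 i + f2 i + f3 i) \<le> wl (\<lambda>i. f1 i + f2 i) + wl f3" by (rule wl_add)
  have d: "wl (\<lambda>i. f1 i + f2 i) \<le> wl f1 + wl f2" by (rule wl_add)
  from a b c d show ?thesis by linarith
qed

lemma sqrt2_facts: "sqrt 2 * sqrt 2 = (2::real)" "0 \<le> sqrt (2::real)" "sqrt (2::real) \<le> 3/2"
proof -
  show "sqrt 2 * sqrt 2 = (2::real)" by simp
  show "0 \<le> sqrt (2::real)" by simp
  have "sqrt (2::real) \<le> sqrt ((3/2)^2)" by (rule real_sqrt_le_mono) (simp add: power2_eq_square)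
  then show "sqrt (2::real) \<le> 3/2" by simp
qed

lemma Lp_max: "k \<in> {1..N} \<Longrightarrow> norm (Lp k) \<le> 4 * Y + norm (L (N+1)) + 3 * beta * (xa + ua)"
proof -
  assume k: "k \<in> {1..N}"
  define q where "q = sqrt (2::real)"
  have qq: "q * q = 2" "0 \<le> q" "q \<le> 3/2" unfolding q_def using sqrt2_facts by auto
  define LN where "LN = norm (L (N+1))"
  define Mp where "Mp = Max ((\<lambda>k. norm (Lp k)) ` {1..N})"
  have Mp_ge: "norm (Lp j) \<le> Mp" if "j \<in> {1..N}" for j unfolding Mp_def by (rule Max_ge) (use that in auto)
  have ne: "(\<lambda>k. norm (Lp k)) ` {1..N} \<noteq> {}" using N1 by auto
  obtain k0 where k0: "k0 \<in> {1..N}" "Mp = norm (Lp k0)"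
    using Max_in[OF _ ne] unfolding Mp_def by auto
  have Mp0: "0 \<le> Mp" using k0 by simp
  have wLp: "wl (\<lambda>i. norm (Lp i)) \<le> q * Mp" unfolding q_def by (rule wl_const_le) (simp add: Mp_ge)
  have "wl (\<lambda>i. norm (r i)) \<le> wl (\<lambda>i. Y + 1/4 * norm (Lp i) + 1/4 * LN + beta * norm (X i) + beta * norm (U i))"
    unfolding LN_def
  proof (rule wl_mono)
    fix i assume i: "i \<in> {1..N}"
    show "0 \<le> norm (r i) \<and> norm (r i) \<le> Y + 1/4 * norm (Lp i) + 1/4 * norm (L (N+1)) + beta * norm (X i) + beta * norm (U i)"
      using r_bound[OF i] by simp
  qed
  also have "\<dots> \<le> wl (\<lambda>i. Y) + wl (\<lambda>i. 1/4 * norm (Lp i)) + wl (\<lambda>i. 1/4 * LN) + wl (\<lambda>i. beta * norm (X i)) + wl (\<lambda>i. beta * norm (U i))"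
    by (rule wl_add5)
  also have "\<dots> \<le> q * Y + q/4 * Mp + q/4 * LN + beta * xa + beta * ua"
  proof -
    have "wl (\<lambda>i. Y) \<le> q * Y" unfolding q_def by (rule wl_const_le) (simp add: Y_nonneg)
    moreover have "wl (\<lambda>i. 1/4 * norm (Lp i)) \<le> q/4 * Mp"
    proof -
      have "wl (\<lambda>i. 1/4 * norm (Lp i)) = 1/4 * wl (\<lambda>i. norm (Lp i))" by (rule wl_scale) simp
      then show ?thesis using wLp by simp
    qed
    moreover have "wl (\<lambda>i. 1/4 * LN) \<le> q * (1/4 * LN)" unfolding q_def by (rule wl_const_le) (simp add: LN_def)
    moreover have "wl (\<lambda>i. beta * norm (X i)) = beta * xa" unfolding xa_def by (rule wl_scale[OF beta])
    moreover have "wl (\<lambda>i. beta * norm (U i)) = beta * ua" unfolding ua_def by (rule wl_scale[OF beta])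
    ultimately show ?thesis by simp
  qed
  finally have wr: "wl (\<lambda>i. norm (r i)) \<le> q * Y + q/4 * Mp + q/4 * LN + beta * xa + beta * ua" .
  have all: "norm (Lp j) \<le> 2 * Y + Mp/2 + LN/2 + q * beta * (xa + ua)" if j: "j \<in> {1..N}" for j
  proof -
    have "norm (Lp j) \<le> q * wl (\<lambda>i. norm (r i))" unfolding q_def by (rule Lp_bound[OF j])
    also have "\<dots> \<le> q * (q * Y + q/4 * Mp + q/4 * LN + beta * xa + beta * ua)"
      by (rule mult_left_mono[OF wr qq(2)])
    also have "\<dots> = (q * q) * Y + (q * q) / 4 * Mp + (q * q)/4 * LN + q * beta * (xa + ua)"
      by (simp add: algebra_simps)
    also have "\<dots> = 2 * Y + Mp/2 + LN/2 + q * beta * (xa + ua)" using qq(1) by simp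
    finally show ?thesis .
  qed
  have "Mp \<le> 2 * Y + Mp/2 + LN/2 + q * beta * (xa + ua)" using all[OF k0(1)] k0(2) by simp
  then have "Mp \<le> 4 * Y + LN + 2 * q * beta * (xa + ua)" by simp
  also have "2 * q * beta * (xa + ua) \<le> 3 * beta * (xa + ua)"
    using qq xa_nn ua_nn beta by (intro mult_right_mono) (auto simp: mult_right_mono)
  finally show ?thesis using Mp_ge[OF k] unfolding LN_def by simp
qed

definition "sa = xa + ua + xe"

lemma L_bound: "i \<in> {1..N+1} \<Longrightarrow> norm (L i) \<le> 6 * Y + 3 * beta * sa"
proof -
  assume i: "i \<in> {1..N+1}"
  have LN: "norm (L (N+1)) \<le> Y + beta * xe" by (rule LN_bound)
  have e1: "beta * sa = beta * xa + beta * ua + beta * xe" unfolding sa_def by (simp add: algebra_simps)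
  have e2: "3 * beta * (xa + ua) = 3 * (beta * xa) + 3 * (beta * ua)" by (simp add: algebra_simps)
  have nn: "0 \<le> beta * xa" "0 \<le> beta * ua" "0 \<le> beta * xe" using beta xa_nn ua_nn xe_nn by auto
  show ?thesis
  proof (cases "i = N+1")
    case True then show ?thesis using LN e1 nn Y_nonneg by simp
  next
    case False
    then have i': "i \<in> {1..N}" using i by auto
    have "L i = Lp i + L (N+1)" unfolding Lp_def by simp
    then have "norm (L i) \<le> norm (Lp i) + norm (L (N+1))" by (metis norm_triangle_ineq)
    then show ?thesis using Lp_max[OF i'] LN e1 e2 nn by linarith
  qed
qed

lemma dotT: "(x::real^'a) \<bullet> (transpose M *v y) = (M *v x) \<bullet> y"
  using dot_mv[of x "transpose M" y] by (simp del: transpose_matrix_vector)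

definition "qf i = X i \<bullet> (Q i *v X i) + 2 * (X i \<bullet> (S i *v U i)) + U i \<bullet> (R i *v U i)"

lemma pointwise: "X i \<bullet> y3 i + U i \<bullet> y5 i + L i \<bullet> y1 i
   = (X i \<bullet> (\<Sum>j\<in>{1..N+1}. Ddag N tau i j *\<^sub>R L j) + L i \<bullet> DX i) + qf i"
proof -
  have a: "X i \<bullet> (transpose (A i) *v L i) = L i \<bullet> (A i *v X i)" by (simp only: dotT inner_commute)
  have b: "U i \<bullet> (transpose (B i) *v L i) = L i \<bullet> (B i *v U i)" by (simp only: dotT inner_commute)
  have c: "U i \<bullet> (transpose (S i) *v X i) = X i \<bullet> (S i *v U i)" by (simp only: dotT inner_commute)
  show ?thesis unfolding y3_def y5_def y1_def qf_def
    by (simp only: inner_add_right inner_diff_right a b c)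
qed

lemma sumDX: "(\<Sum>i\<in>{1..N}. w i *\<^sub>R DX i) = (\<Sum>i\<in>{1..N}. w i *\<^sub>R y1 i) + X (N+1) - y2"
proof -
  have "(\<Sum>i\<in>{1..N}. w i *\<^sub>R DX i) = (\<Sum>i\<in>{1..N}. w i *\<^sub>R y1 i + w i *\<^sub>R (A i *v X i + B i *v U i))"
    by (rule sum.cong) (simp_all add: y1_def algebra_simps)
  also have "\<dots> = (\<Sum>i\<in>{1..N}. w i *\<^sub>R y1 i) + (\<Sum>i\<in>{1..N}. w i *\<^sub>R (A i *v X i + B i *v U i))"
    by (rule sum.distrib)
  finally show ?thesis unfolding y2_def by simp
qed

lemma energy:
  "(\<Sum>i\<in>{1..N}. w i * qf i) + X (N+1) \<bullet> (T *v X (N+1))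
   = (\<Sum>i\<in>{1..N}. w i * (X i \<bullet> y3 i + U i \<bullet> y5 i + L i \<bullet> y1 i))
     - L (N+1) \<bullet> (\<Sum>i\<in>{1..N}. w i *\<^sub>R y1 i) + L (N+1) \<bullet> y2 - y4 \<bullet> X (N+1)"
proof -
  have "(\<Sum>i\<in>{1..N}. w i * (X i \<bullet> y3 i + U i \<bullet> y5 i + L i \<bullet> y1 i))
      = (\<Sum>i\<in>{1..N}. w i * (X i \<bullet> (\<Sum>j\<in>{1..N+1}. Ddag N tau i j *\<^sub>R L j)) + w i * (L i \<bullet> DX i) + w i * qf i)"
    by (rule sum.cong) (simp_all only: pointwise distrib_left)
  also have "\<dots> = ((\<Sum>i\<in>{1..N}. w i * (X i \<bullet> (\<Sum>j\<in>{1..N+1}. Ddag N tau i j *\<^sub>R L j))) + (\<Sum>i\<in>{1..N}. w i * (L i \<bullet> DX i))) + (\<Sum>i\<in>{1..N}. w i * qf i)"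
    by (simp only: sum.distrib)
  also have "(\<Sum>i\<in>{1..N}. w i * (X i \<bullet> (\<Sum>j\<in>{1..N+1}. Ddag N tau i j *\<^sub>R L j))) + (\<Sum>i\<in>{1..N}. w i * (L i \<bullet> DX i))
      = L (N+1) \<bullet> (\<Sum>i\<in>{1..N}. w i *\<^sub>R DX i)"
    unfolding DX_def by (rule adj_id)
  also have "L (N+1) \<bullet> (\<Sum>i\<in>{1..N}. w i *\<^sub>R DX i) = L (N+1) \<bullet> (\<Sum>i\<in>{1..N}. w i *\<^sub>R y1 i) + L (N+1) \<bullet> X (N+1) - L (N+1) \<bullet> y2"
    unfolding sumDX by (simp add: inner_add_right inner_diff_right)
  also have "L (N+1) \<bullet> X (N+1) = y4 \<bullet> X (N+1) + X (N+1) \<bullet> (T *v X (N+1))"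
  proof -
    have "X (N+1) \<bullet> (T *v X (N+1)) = (T *v X (N+1)) \<bullet> X (N+1)" by (rule inner_commute)
    then show ?thesis unfolding y4_def by (simp add: inner_diff_left)
  qed
  finally show ?thesis by simp
qed

lemma quad_sol:
  fixes s p q :: real
  assumes "0 \<le> s" "0 \<le> p" "0 \<le> q" "s^2 \<le> p * s + q"
  shows "s \<le> p + sqrt q"
proof (rule ccontr)
  assume "\<not> s \<le> p + sqrt q"
  then have h: "s > p + sqrt q" by simp
  have sq: "0 \<le> sqrt q" using assms by simp
  have "s * sqrt q \<ge> sqrt q * sqrt q" using h sq assms(2) by (intro mult_right_mono) auto
  then have a: "s * sqrt q \<ge> q" using assms(3) by simp
  have s0: "0 < s" using h sq assms(2) by linarith
  have "s * (s - p) > s * sqrt q" using h s0 by (intro mult_strict_left_mono) auto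
  then have "s^2 - p * s > q" using a by (simp add: power2_eq_square algebra_simps)
  then show False using assms(4) by simp
qed

lemma sum_w_le: "(\<And>i. i \<in> {1..N} \<Longrightarrow> f i \<le> g i) \<Longrightarrow> (\<Sum>i\<in>{1..N}. w i * f i) \<le> (\<Sum>i\<in>{1..N}. w i * g i)"
  by (rule sum_mono) (auto intro!: mult_left_mono simp: w_pos less_imp_le)

lemma lower: "alpha * (xa^2 + ua^2 + xe^2) \<le> (\<Sum>i\<in>{1..N}. w i * qf i) + X (N+1) \<bullet> (T *v X (N+1))"
proof -
  have "alpha * (xa^2 + ua^2) = (\<Sum>i\<in>{1..N}. w i * (alpha * ((norm (X i))^2 + (norm (U i))^2)))"
    unfolding xa_def ua_def wl_sq by (simp add: sum_distrib_left sum.distrib algebra_simps)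
  also have "\<dots> \<le> (\<Sum>i\<in>{1..N}. w i * qf i)"
  proof (rule sum_w_le)
    fix i assume i: "i \<in> {1..N}"
    have "alpha * (X i \<bullet> X i + U i \<bullet> U i) \<le> qf i" unfolding qf_def
      using symQR eigB i by (intro block_lower) auto
    then show "alpha * ((norm (X i))^2 + (norm (U i))^2) \<le> qf i" by (simp add: power2_norm_eq_inner)
  qed
  finally have a: "alpha * (xa^2 + ua^2) \<le> (\<Sum>i\<in>{1..N}. w i * qf i)" .
  have b: "alpha * xe^2 \<le> X (N+1) \<bullet> (T *v X (N+1))"
    unfolding xe_def power2_norm_eq_inner by (rule eig_lower[OF symT eigT])
  from a b show ?thesis by (simp add: algebra_simps)
qed

lemma upper: "(\<Sum>i\<in>{1..N}. w i * (X i \<bullet> y3 i + U i \<bullet> y5 i + L i \<bullet> y1 i))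
     - L (N+1) \<bullet> (\<Sum>i\<in>{1..N}. w i *\<^sub>R y1 i) + L (N+1) \<bullet> y2 - y4 \<bullet> X (N+1)
   \<le> (2 + 15 * beta) * Y * sa + 30 * Y^2"
proof -
  define LB where "LB = 6 * Y + 3 * beta * sa"
  have LB: "i \<in> {1..N+1} \<Longrightarrow> norm (L i) \<le> LB" for i unfolding LB_def by (rule L_bound)
  have ip: "(a::real^'k) \<bullet> b \<le> norm a * c" if "norm b \<le> c" for a b c
    using norm_cauchy_schwarz[of a b] mult_left_mono[OF that norm_ge_zero[of a]] by linarith
  have nLN: "norm (L (N+1)) \<le> LB" using LB[of "N+1"] by simp
  have LB0: "0 \<le> LB" using nLN norm_ge_zero order_trans by blast
  have t1: "(\<Sum>i\<in>{1..N}. w i * (X i \<bullet> y3 i + U i \<bullet> y5 i + L i \<bullet> y1 i))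
      \<le> (\<Sum>i\<in>{1..N}. w i * (Y * norm (X i) + Y * norm (U i) + Y * LB))"
  proof (rule sum_w_le)
    fix i assume i: "i \<in> {1..N}"
    have "X i \<bullet> y3 i \<le> norm (X i) * Y" by (rule ip) (rule Y_ge(3)[OF i])
    moreover have "U i \<bullet> y5 i \<le> norm (U i) * Y" by (rule ip) (rule Y_ge(5)[OF i])
    moreover have "L i \<bullet> y1 i \<le> norm (L i) * Y" by (rule ip) (rule Y_ge(1)[OF i])
    moreover have "norm (L i) * Y \<le> LB * Y" using LB[of i] i Y_nonneg by (intro mult_right_mono) auto
    ultimately show "X i \<bullet> y3 i + U i \<bullet> y5 i + L i \<bullet> y1 i \<le> Y * norm (X i) + Y * norm (U i) + Y * LB"
      by (simp add: algebra_simps)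
  qed
  also have "\<dots> = Y * (\<Sum>i\<in>{1..N}. w i * \<bar>norm (X i)\<bar>) + Y * (\<Sum>i\<in>{1..N}. w i * \<bar>norm (U i)\<bar>) + Y * LB * (\<Sum>i\<in>{1..N}. w i)"
    by (simp add: sum_distrib_left sum_distrib_right sum.distrib algebra_simps)
  also have "\<dots> \<le> Y * (sqrt 2 * xa) + Y * (sqrt 2 * ua) + Y * LB * 2"
    unfolding w_sum xa_def ua_def using Y_nonneg LB0
    by (intro add_mono mult_left_mono wl_sum_le) auto
  finally have t1': "(\<Sum>i\<in>{1..N}. w i * (X i \<bullet> y3 i + U i \<bullet> y5 i + L i \<bullet> y1 i)) \<le> Y * (sqrt 2 * xa) + Y * (sqrt 2 * ua) + Y * LB * 2" .
  have sy1: "norm (\<Sum>i\<in>{1..N}. w i *\<^sub>R y1 i) \<le> 2 * Y"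
  proof -
    have "norm (\<Sum>i\<in>{1..N}. w i *\<^sub>R y1 i) \<le> (\<Sum>i\<in>{1..N}. norm (w i *\<^sub>R y1 i))" by (rule norm_sum)
    also have "\<dots> = (\<Sum>i\<in>{1..N}. w i * norm (y1 i))" by (rule sum.cong) (auto simp: w_pos less_imp_le)
    also have "\<dots> \<le> (\<Sum>i\<in>{1..N}. w i * Y)" by (rule sum_w_le) (rule Y_ge(1))
    also have "\<dots> = 2 * Y" using w_sum by (simp add: sum_distrib_right[symmetric])
    finally show ?thesis .
  qed
  have t2: "- (L (N+1) \<bullet> (\<Sum>i\<in>{1..N}. w i *\<^sub>R y1 i)) \<le> LB * (2 * Y)"
  proof -
    have "- (L (N+1) \<bullet> (\<Sum>i\<in>{1..N}. w i *\<^sub>R y1 i)) \<le> norm (L (N+1)) * norm (\<Sum>i\<in>{1..N}. w i *\<^sub>R y1 i)"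
      using Cauchy_Schwarz_ineq2[of "L (N+1)" "\<Sum>i\<in>{1..N}. w i *\<^sub>R y1 i"] by linarith
    also have "\<dots> \<le> LB * (2 * Y)" using nLN sy1 LB0 by (intro mult_mono) auto
    finally show ?thesis .
  qed
  have t3: "L (N+1) \<bullet> y2 \<le> LB * Y"
  proof -
    have "L (N+1) \<bullet> y2 \<le> norm (L (N+1)) * norm y2" by (rule norm_cauchy_schwarz)
    also have "\<dots> \<le> LB * Y" using nLN Y_ge(2) LB0 by (intro mult_mono) auto
    finally show ?thesis .
  qed
  have t4: "- (y4 \<bullet> X (N+1)) \<le> Y * xe"
  proof -
    have "- (y4 \<bullet> X (N+1)) \<le> norm y4 * norm (X (N+1))"
      using Cauchy_Schwarz_ineq2[of y4 "X (N+1)"] by linarith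
    also have "\<dots> \<le> Y * xe" unfolding xe_def using Y_ge(4) by (intro mult_right_mono) auto
    finally show ?thesis .
  qed
  have q2: "sqrt 2 \<le> (2::real)" using sqrt2_facts(3) by simp
  have t5: "Y * (sqrt 2 * xa) + Y * (sqrt 2 * ua) + Y * xe \<le> 2 * Y * sa"
  proof -
    have "Y * (sqrt 2 * xa) \<le> Y * (2 * xa)" using q2 xa_nn Y_nonneg by (intro mult_left_mono mult_right_mono) auto
    moreover have "Y * (sqrt 2 * ua) \<le> Y * (2 * ua)" using q2 ua_nn Y_nonneg by (intro mult_left_mono mult_right_mono) auto
    moreover have "Y * xe \<le> Y * (2 * xe)" using xe_nn Y_nonneg by (intro mult_left_mono) auto
    ultimately show ?thesis unfolding sa_def by (simp add: algebra_simps)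
  qed
  have "(\<Sum>i\<in>{1..N}. w i * (X i \<bullet> y3 i + U i \<bullet> y5 i + L i \<bullet> y1 i))
     - L (N+1) \<bullet> (\<Sum>i\<in>{1..N}. w i *\<^sub>R y1 i) + L (N+1) \<bullet> y2 - y4 \<bullet> X (N+1)
     \<le> 2 * Y * sa + 5 * Y * LB"
    using t1' t2 t3 t4 t5 by (simp add: algebra_simps)
  also have "\<dots> = (2 + 15 * beta) * Y * sa + 30 * Y^2" unfolding LB_def by (simp add: algebra_simps power2_eq_square)
  finally show ?thesis .
qed

definition "K = 3 * (2 + 15 * beta) / alpha + sqrt (90 / alpha)"

lemma sa_bound: "sa \<le> K * Y"
proof -
  have sa0: "0 \<le> sa" unfolding sa_def using xa_nn ua_nn xe_nn by simp
  have e: "alpha * (xa^2 + ua^2 + xe^2) \<le> (2 + 15 * beta) * Y * sa + 30 * Y^2"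
    using lower energy upper by linarith
  have "sa^2 \<le> 3 * (xa^2 + ua^2 + xe^2)"
    unfolding sa_def using sum_squares_bound[of xa ua] sum_squares_bound[of xa xe] sum_squares_bound[of ua xe]
    by (simp add: power2_eq_square algebra_simps)
  then have "alpha * sa^2 \<le> 3 * (alpha * (xa^2 + ua^2 + xe^2))" using alpha
    by (simp add: mult_left_mono)
  also have "\<dots> \<le> 3 * ((2 + 15 * beta) * Y * sa + 30 * Y^2)" using e by simp
  finally have h: "alpha * sa^2 \<le> 3 * ((2 + 15 * beta) * Y * sa + 30 * Y^2)" .
  have "sa^2 \<le> (3 * (2 + 15 * beta) * Y / alpha) * sa + 90 * Y^2 / alpha"
    using h alpha by (simp add: field_simps)
  then have "sa \<le> 3 * (2 + 15 * beta) * Y / alpha + sqrt (90 * Y^2 / alpha)"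
    using sa0 Y_nonneg alpha beta by (intro quad_sol) auto
  also have "sqrt (90 * Y^2 / alpha) = sqrt (90 / alpha) * Y"
    using Y_nonneg by (simp add: real_sqrt_mult real_sqrt_divide)
  finally show ?thesis unfolding K_def by (simp add: algebra_simps)
qed

lemma K_nn: "0 \<le> K" unfolding K_def using alpha beta by simp

lemma X_bound: "i \<in> {1..N+1} \<Longrightarrow> norm (X i) \<le> CXc alpha beta * Y"
proof -
  assume i: "i \<in> {1..N+1}"
  have KY: "sa \<le> K * Y" by (rule sa_bound)
  have Kc: "Kc alpha beta = K" unfolding Kc_def K_def by simp
  have bKY: "0 \<le> beta * K * Y" using beta K_nn Y_nonneg by simp
  have sa_xa: "xa + ua \<le> sa" unfolding sa_def using xe_nn by simp
  show ?thesis
  proof (cases "i = N+1")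
    case True
    have "norm (X i) = xe" unfolding xe_def True by simp
    also have "\<dots> \<le> sa" unfolding sa_def using xa_nn ua_nn by simp
    finally show ?thesis using KY bKY Y_nonneg unfolding CXc_def Kc by (simp add: algebra_simps)
  next
    case False
    then have i': "i \<in> {1..N}" using i by auto
    obtain F where inv: "is_inverse_N N (\<lambda>i j. sqrt (w i) * colloc_D N tau i j) F"
      and rows: "\<forall>i\<in>{1..N}. sqrt (\<Sum>j\<in>{1..N}. (F i j)\<^sup>2) \<le> sqrt 2" using P2 by blast
    define u where "u i = sqrt (w i) *\<^sub>R (y1 i + A i *v X i + B i *v U i)" for i
    have eq: "(\<Sum>j\<in>{1..N}. (sqrt (w k) * colloc_D N tau k j) *\<^sub>R X j) = u k" if "k \<in> {1..N}" for k
    proof -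
      have "(\<Sum>j\<in>{1..N}. (sqrt (w k) * colloc_D N tau k j) *\<^sub>R X j) = sqrt (w k) *\<^sub>R DX k"
        unfolding DX_def by (simp add: scaleR_sum_right)
      then show ?thesis unfolding u_def y1_def by simp
    qed
    have "norm (X i) \<le> sqrt 2 * L2_set (\<lambda>j. norm (u j)) {1..N}" by (rule inv_bound[OF inv rows eq i'])
    also have "L2_set (\<lambda>j. norm (u j)) {1..N} = wl (\<lambda>j. norm (y1 j + A j *v X j + B j *v U j))"
      unfolding wl_def u_def by (rule L2_set_cong) (auto simp: w_pos less_imp_le)
    also have "\<dots> \<le> wl (\<lambda>j. Y + beta * norm (X j) + beta * norm (U j))"
    proof (rule wl_mono)
      fix j assume j: "j \<in> {1..N}"
      have "norm (y1 j + A j *v X j + B j *v U j) \<le> norm (y1 j) + norm (A j *v X j) + norm (B j *v U j)"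
        by (meson add_mono norm_triangle_ineq order_refl order_trans)
      then show "0 \<le> norm (y1 j + A j *v X j + B j *v U j) \<and> norm (y1 j + A j *v X j + B j *v U j) \<le> Y + beta * norm (X j) + beta * norm (U j)"
        using Y_ge(1)[OF j] nA[OF j, of "X j"] nB[OF j, of "U j"] by simp
    qed
    also have "\<dots> \<le> wl (\<lambda>j. Y + beta * norm (X j)) + wl (\<lambda>j. beta * norm (U j))" by (rule wl_add)
    also have "\<dots> \<le> wl (\<lambda>j. Y) + wl (\<lambda>j. beta * norm (X j)) + wl (\<lambda>j. beta * norm (U j))" using wl_add by simp
    also have "\<dots> \<le> sqrt 2 * Y + beta * xa + beta * ua"
    proof -
      have "wl (\<lambda>j. Y) \<le> sqrt 2 * Y" by (rule wl_const_le) (simp add: Y_nonneg)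
      moreover have "wl (\<lambda>j. beta * norm (X j)) = beta * xa" unfolding xa_def by (rule wl_scale[OF beta])
      moreover have "wl (\<lambda>j. beta * norm (U j)) = beta * ua" unfolding ua_def by (rule wl_scale[OF beta])
      ultimately show ?thesis by simp
    qed
    finally have h: "norm (X i) \<le> sqrt 2 * (sqrt 2 * Y + beta * xa + beta * ua)" by simp
    have "sqrt 2 * (sqrt 2 * Y + beta * xa + beta * ua) = 2 * Y + sqrt 2 * (beta * (xa + ua))"
      by (simp add: algebra_simps)
    also have "\<dots> \<le> 2 * Y + 2 * (beta * (xa + ua))"
      using sqrt2_facts(3) beta xa_nn ua_nn by (intro add_left_mono mult_right_mono) auto
    also have "\<dots> \<le> 2 * Y + 2 * (beta * (K * Y))"
      using sa_xa KY beta by (intro add_left_mono mult_left_mono) auto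
    also have "\<dots> \<le> CXc alpha beta * Y" unfolding CXc_def Kc using K_nn Y_nonneg by (simp add: algebra_simps)
    finally show ?thesis using h by simp
  qed
qed

lemma L_bound2: "i \<in> {1..N+1} \<Longrightarrow> norm (L i) \<le> CLc alpha beta * Y"
proof -
  assume i: "i \<in> {1..N+1}"
  have Kc: "Kc alpha beta = K" unfolding Kc_def K_def by simp
  have "norm (L i) \<le> 6 * Y + 3 * beta * sa" by (rule L_bound[OF i])
  also have "\<dots> \<le> 6 * Y + 3 * beta * (K * Y)" using sa_bound beta by (simp add: mult_left_mono)
  finally show ?thesis unfolding CLc_def Kc by (simp add: algebra_simps)
qed

lemma U_bound: "i \<in> {1..N} \<Longrightarrow> norm (U i) \<le> CUc alpha beta * Y"
proof -
  assume i: "i \<in> {1..N}"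
  have "alpha * ((0::real^'n) \<bullet> 0 + U i \<bullet> U i) \<le> (0::real^'n) \<bullet> (Q i *v 0) + 2 * ((0::real^'n) \<bullet> (S i *v U i)) + U i \<bullet> (R i *v U i)"
    using symQR eigB i by (intro block_lower[where X="0::real^'n" and U="U i" and Q="Q i" and R="R i" and S="S i" and a=alpha]) auto
  then have "alpha * (norm (U i))^2 \<le> U i \<bullet> (R i *v U i)" by (simp add: power2_norm_eq_inner)
  also have "\<dots> \<le> norm (U i) * norm (R i *v U i)" by (rule norm_cauchy_schwarz)
  finally have a: "alpha * (norm (U i))^2 \<le> norm (U i) * norm (R i *v U i)" .
  have b: "alpha * norm (U i) \<le> norm (R i *v U i)"
  proof (cases "norm (U i) = 0")
    case True then show ?thesis by simp
  next
    case False
    then have "norm (U i) > 0" by simp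
    then show ?thesis using a by (simp add: power2_eq_square mult.assoc[symmetric] mult.commute[of alpha])
  qed
  have RU: "R i *v U i = y5 i - transpose (S i) *v X i - transpose (B i) *v L i" unfolding y5_def by simp
  have "norm (R i *v U i) \<le> norm (y5 i) + norm (transpose (S i) *v X i) + norm (transpose (B i) *v L i)"
    unfolding RU by (metis (no_types) add_mono norm_triangle_ineq4 order_refl order_trans)
  also have "\<dots> \<le> Y + beta * (CXc alpha beta * Y) + beta * (CLc alpha beta * Y)"
  proof -
    have "norm (transpose (S i) *v X i) \<le> beta * norm (X i)" by (rule nST[OF i])
    also have "\<dots> \<le> beta * (CXc alpha beta * Y)" using X_bound[of i] i beta by (intro mult_left_mono) auto
    finally have s: "norm (transpose (S i) *v X i) \<le> beta * (CXc alpha beta * Y)" .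
    have "norm (transpose (B i) *v L i) \<le> beta * norm (L i)" by (rule nBT[OF i])
    also have "\<dots> \<le> beta * (CLc alpha beta * Y)" using L_bound2[of i] i beta by (intro mult_left_mono) auto
    finally have bb: "norm (transpose (B i) *v L i) \<le> beta * (CLc alpha beta * Y)" .
    show ?thesis using s bb Y_ge(5)[OF i] by linarith
  qed
  finally have "alpha * norm (U i) \<le> (1 + beta * CXc alpha beta + beta * CLc alpha beta) * Y" using b
    by (simp add: algebra_simps)
  then show ?thesis unfolding CUc_def using alpha by (simp add: field_simps)
qed

lemma final: "blk_norm {1..N+1} X + blk_norm {1..N} U + blk_norm {1..N+1} L
   \<le> (CXc alpha beta + CUc alpha beta + CLc alpha beta) * Y"
proof -
  have a: "blk_norm {1..N+1} X \<le> CXc alpha beta * Y" unfolding blk_norm_def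
    using X_bound by (subst Max_le_iff) auto
  have b: "blk_norm {1..N} U \<le> CUc alpha beta * Y" unfolding blk_norm_def
    using U_bound N1 by (subst Max_le_iff) auto
  have c: "blk_norm {1..N+1} L \<le> CLc alpha beta * Y" unfolding blk_norm_def
    using L_bound2 by (subst Max_le_iff) auto
  from a b c show ?thesis by (simp add: algebra_simps)
qed

end


theorem lemma6p1:
  fixes alpha beta :: real
  assumes "alpha > 0" and "beta \<ge> 0"
  shows "\<exists>c::real. \<forall>(N::nat) (tau::nat \<Rightarrow> real)
      (A::nat \<Rightarrow> real^'n^'n) (B::nat \<Rightarrow> real^'m^'n) (Q::nat \<Rightarrow> real^'n^'n)
      (S::nat \<Rightarrow> real^'m^'n) (R::nat \<Rightarrow> real^'m^'m) (T::real^'n^'n).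
    N \<ge> 1 \<and> gauss_nodes N tau \<and>
    transpose T = T \<and>
    (\<forall>i\<in>{1..N}. transpose (Q i) = Q i \<and> transpose (R i) = R i) \<and>
    eigs_gt T alpha \<and>
    (\<forall>i\<in>{1..N}. eigs_gt (block_QSR (Q i) (S i) (R i)) alpha) \<and>
    (\<forall>i\<in>{1..N}. mat_inf_norm (A i) \<le> 1/4 \<and> mat_inf_norm (transpose (A i)) \<le> 1/4) \<and>
    (\<forall>i\<in>{1..N}. mat_norm (A i) \<le> beta \<and> mat_norm (B i) \<le> beta \<and> mat_norm (Q i) \<le> beta \<and>
                 mat_norm (S i) \<le> beta \<and> mat_norm (R i) \<le> beta) \<and>
    mat_norm T \<le> beta \<and>
    (\<exists>E. is_inverse_N N (colloc_D N tau) E \<and>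
         (\<forall>i\<in>{1..N}. (\<Sum>j\<in>{1..N}. \<bar>E i j\<bar>) \<le> 2)) \<and>
    (\<exists>F. is_inverse_N N (\<lambda>i j. sqrt (gauss_weight N tau i) * colloc_D N tau i j) F \<and>
         (\<forall>i\<in>{1..N}. sqrt (\<Sum>j\<in>{1..N}. (F i j)\<^sup>2) \<le> sqrt 2))
    \<longrightarrow> (\<forall>(X::nat \<Rightarrow> real^'n) (U::nat \<Rightarrow> real^'m) (L::nat \<Rightarrow> real^'n).
          blk_norm {1..N+1} X + blk_norm {1..N} U + blk_norm {1..N+1} L
            \<le> c * y_norm N (gradT_star N tau A B Q S R T X U L))"
proof (intro exI[of _ "CXc alpha beta + CUc alpha beta + CLc alpha beta"] allI impI)
  fix N :: nat and tau :: "nat \<Rightarrow> real" and A :: "nat \<Rightarrow> real^'n^'n" and B :: "nat \<Rightarrow> real^'m^'n"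
    and Q :: "nat \<Rightarrow> real^'n^'n" and S :: "nat \<Rightarrow> real^'m^'n" and R :: "nat \<Rightarrow> real^'m^'m" and T :: "real^'n^'n"
    and X :: "nat \<Rightarrow> real^'n" and U :: "nat \<Rightarrow> real^'m" and L :: "nat \<Rightarrow> real^'n"
  assume H: "N \<ge> 1 \<and> gauss_nodes N tau \<and>
    transpose T = T \<and>
    (\<forall>i\<in>{1..N}. transpose (Q i) = Q i \<and> transpose (R i) = R i) \<and>
    eigs_gt T alpha \<and>
    (\<forall>i\<in>{1..N}. eigs_gt (block_QSR (Q i) (S i) (R i)) alpha) \<and>
    (\<forall>i\<in>{1..N}. mat_inf_norm (A i) \<le> 1/4 \<and> mat_inf_norm (transpose (A i)) \<le> 1/4) \<and>
    (\<forall>i\<in>{1..N}. mat_norm (A i) \<le> beta \<and> mat_norm (B i) \<le> beta \<and> mat_norm (Q i) \<le> beta \<and>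
                 mat_norm (S i) \<le> beta \<and> mat_norm (R i) \<le> beta) \<and>
    mat_norm T \<le> beta \<and>
    (\<exists>E. is_inverse_N N (colloc_D N tau) E \<and>
         (\<forall>i\<in>{1..N}. (\<Sum>j\<in>{1..N}. \<bar>E i j\<bar>) \<le> 2)) \<and>
    (\<exists>F. is_inverse_N N (\<lambda>i j. sqrt (gauss_weight N tau i) * colloc_D N tau i j) F \<and>
         (\<forall>i\<in>{1..N}. sqrt (\<Sum>j\<in>{1..N}. (F i j)\<^sup>2) \<le> sqrt 2))"
  interpret sys N tau A B Q S R T X U L alpha beta
    by unfold_locales (use H assms in auto)
  show "blk_norm {1..N+1} X + blk_norm {1..N} U + blk_norm {1..N+1} L
            \<le> (CXc alpha beta + CUc alpha beta + CLc alpha beta) * y_norm N (gradT_star N tau A B Q S R T X U L)"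
    using final unfolding grad_eq Y_def .
qed

end
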